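(* Let $m\ge 3$ and $k\ge 1$ be integers with $m+2k-4\neq 0$. For every $f(x,u)\in C^{\infty}(\mathbb{R}^m,\mathcal{H}_k)$ the higher spin Laplace operator satisfies \begin{eqnarray*} \mathcal{D}_2 f&=&\Big(-R_k^2P_k^++\frac{2T_k^*R_kP_k^+}{m+2k-4}-\frac{2T_kQ_kP_k^-}{m+2k-4}-\frac{(m+2k)Q_k^2P_k^-}{m+2k-4}\Big)f\\ &=&\Big(-R_k^2P_k^++\frac{2R_kT_kP_k^-}{m+2k-4}-\frac{2Q_kT_k^*P_k^+}{m+2k-4}-\frac{(m+2k)Q_k^2P_k^-}{m+2k-4}\Big)f. \end{eqnarray*}
   Context: $\mathcal{C}l_m(\mathbb{C})$ is the complex Clifford algebra generated by an orthonormal basis $e_1,\dots,e_m$ of $\mathbb{R}^m$ with $e_ie_j+e_je_i=-2\delta_{ij}$; vectors $x=\sum x_ie_i\in\mathbb{R}^m$ are identified with elements of the algebra. $D_x=\sum_{i=1}^m e_i\partial_{x_i}$ and $D_u=\sum_i e_i\partial_{u_i}$ are Dirac operators (acting by left multiplication), $\Delta_x$ the Laplacian, $\langle u,D_x\rangle=\sum_i u_i\partial_{x_i}$, $\langle D_u,D_x\rangle=\sum_i\partial_{u_i}\partial_{x_i}$. $\mathcal{H}_k$ is the space of $\mathcal{C}l_m(\mathbb{C})$-valued harmonic polynomials in $u\in\mathbb{R}^m$ homogeneous of degree $k$, $\mathcal{M}_k$ the space of $\mathcal{C}l_m(\mathbb{C})$-valued left monogenic ($D_up=0$) polynomials homogeneous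 of degree $k$; $\mathcal{H}_k=\mathcal{M}_k\oplus u\mathcal{M}_{k-1}$, with projections $P_k^+=1+\frac{uD_u}{m+2k-2}:\mathcal{H}_k\to\mathcal{M}_k$ and $P_k^-=1-P_k^+=-\frac{uD_u}{m+2k-2}:\mathcal{H}_k\to u\mathcal{M}_{k-1}$ (applied in the variable $u$). $C^\infty(\mathbb{R}^m,V)$ denotes smooth functions $f(x,u)$ with $f(x,\cdot)\in V$ for each $x$. The Rarita–Schwinger type operators are: $R_k=P_k^+D_x$ on $C^\infty(\mathbb{R}^m,\mathcal{M}_k)$ (to $\mathcal{M}_k$-valued), $T_k=P_k^+D_x$ on $C^\infty(\mathbb{R}^m,u\mathcal{M}_{k-1})$ (to $\mathcal{M}_k$-valued), $T_k^*=P_k^-D_x$ on $C^\infty(\mathbb{R}^m,\mathcal{M}_k)$ (to $u\mathcal{M}_{k-1}$-valued), $Q_k=P_k^-D_x$ on $C^\infty(\mathbb{R}^m,u\mathcal{M}_{k-1})$ (to $u\mathcal{M}_{k-1}$-valued). The higher spin Laplace operator is $\mathcal{D}_2=\Delta_x-\frac{4\langle u,D_x\rangle\langle D_u,D_x\rangle}{m+2k-2}+\frac{4\|u\|^2\langle D_u,D_x\rangle^2}{(m+2k-2)(m+2k-4)}$, acting on $C^\infty(\mathbb{R}^m,\mathcal{H}_k)$. *)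

theory Defs
  imports "HOL-Analysis.Analysis"
begin

section \<open>The complex Clifford algebra Cl_m(C), m = CARD('n)\<close>

text \<open>Elements are complex linear combinations of the basis blades e_A, A a subset of the
  index set; blades are ordered by the (arbitrary, fixed) linear order on the index type.\<close>

type_synonym 'n cl = "complex ^ ('n set)"

definition cl_sign :: "'n::{finite,linorder} set \<Rightarrow> 'n set \<Rightarrow> complex" where
  "cl_sign A B = (-1) ^ (card {(a,b). a \<in> A \<and> b \<in> B \<and> b < a} + card (A \<inter> B))"

text \<open>e_A e_B = sign(A,B) e_(A symmetric-difference B), encoding e_i e_j + e_j e_i = -2 delta_ij.\<close>
definition cl_mult :: "'n::{finite,linorder} cl \<Rightarrow> 'n cl \<Rightarrow> 'n cl" (infixl "\<odot>" 70) where
  "a \<odot> b = (\<chi> C. \<Sum>A\<in>UNIV. \<Sum>B\<in>UNIV.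
      if (A - B) \<union> (B - A) = C then cl_sign A B * (a $ A) * (b $ B) else 0)"

definition cl_e :: "'n::{finite,linorder} \<Rightarrow> 'n cl" where
  "cl_e i = (\<chi> A. if A = {i} then 1 else 0)"

definition cl_vec :: "real ^ ('n::{finite,linorder}) \<Rightarrow> 'n cl" where
  "cl_vec x = (\<Sum>i\<in>UNIV. (x $ i) *\<^sub>R cl_e i)"

definition pd :: "'n::finite \<Rightarrow> (real ^ 'n \<Rightarrow> 'a::real_normed_vector) \<Rightarrow> real ^ 'n \<Rightarrow> 'a" where
  "pd i g y = vector_derivative (\<lambda>t. g (y + t *\<^sub>R axis i 1)) (at 0)"

coinductive smooth :: "('a::real_normed_vector \<Rightarrow> 'b::real_normed_vector) \<Rightarrow> bool" where
  "(\<forall>x. g differentiable (at x)) \<Longrightarrow> (\<forall>v. smooth (\<lambda>x. frechet_derivative g (at x) v)) \<Longrightarrow> smooth g"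

definition hom_poly :: "nat \<Rightarrow> (real ^ ('n::{finite,linorder}) \<Rightarrow> 'n cl) \<Rightarrow> bool" where
  "hom_poly k p \<longleftrightarrow> (\<exists>c :: ('n \<Rightarrow> nat) \<Rightarrow> 'n cl. \<forall>u.
      p u = (\<Sum>\<alpha>\<in>{\<alpha>::'n \<Rightarrow> nat. (\<Sum>i\<in>UNIV. \<alpha> i) = k}. (\<Prod>i\<in>UNIV. (u $ i) ^ (\<alpha> i)) *\<^sub>R c \<alpha>))"

definition harmonic :: "(real ^ ('n::{finite,linorder}) \<Rightarrow> 'n cl) \<Rightarrow> bool" where
  "harmonic p \<longleftrightarrow> (\<forall>u. (\<Sum>i\<in>UNIV. pd i (pd i p) u) = 0)"

definition in_H :: "nat \<Rightarrow> (real ^ ('n::{finite,linorder}) \<Rightarrow> 'n cl) \<Rightarrow> bool" where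
  "in_H k p \<longleftrightarrow> hom_poly k p \<and> harmonic p"

type_synonym 'n clfun = "real ^ 'n \<Rightarrow> real ^ 'n \<Rightarrow> 'n cl"

definition dx :: "('n::{finite,linorder}) \<Rightarrow> 'n clfun \<Rightarrow> 'n clfun" where
  "dx i f = (\<lambda>x u. pd i (\<lambda>y. f y u) x)"

definition du :: "('n::{finite,linorder}) \<Rightarrow> 'n clfun \<Rightarrow> 'n clfun" where
  "du i f = (\<lambda>x u. pd i (f x) u)"

definition Dx :: "('n::{finite,linorder}) clfun \<Rightarrow> 'n clfun" where
  "Dx f = (\<lambda>x u. \<Sum>i\<in>UNIV. cl_e i \<odot> dx i f x u)"

definition Du :: "('n::{finite,linorder}) clfun \<Rightarrow> 'n clfun" where
  "Du f = (\<lambda>x u. \<Sum>i\<in>UNIV. cl_e i \<odot> du i f x u)"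

definition Lapx :: "('n::{finite,linorder}) clfun \<Rightarrow> 'n clfun" where
  "Lapx f = (\<lambda>x u. \<Sum>i\<in>UNIV. dx i (dx i f) x u)"

definition uDx :: "('n::{finite,linorder}) clfun \<Rightarrow> 'n clfun" where
  "uDx f = (\<lambda>x u. \<Sum>i\<in>UNIV. (u $ i) *\<^sub>R dx i f x u)"

definition DuDx :: "('n::{finite,linorder}) clfun \<Rightarrow> 'n clfun" where
  "DuDx f = (\<lambda>x u. \<Sum>i\<in>UNIV. du i (dx i f) x u)"

definition Pp :: "nat \<Rightarrow> ('n::{finite,linorder}) clfun \<Rightarrow> 'n clfun" where
  "Pp k f = (\<lambda>x u. f x u + (1 / (real CARD('n) + 2 * real k - 2)) *\<^sub>R (cl_vec u \<odot> Du f x u))"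

definition Pm :: "nat \<Rightarrow> ('n::{finite,linorder}) clfun \<Rightarrow> 'n clfun" where
  "Pm k f = (\<lambda>x u. - ((1 / (real CARD('n) + 2 * real k - 2)) *\<^sub>R (cl_vec u \<odot> Du f x u)))"

text \<open>Rarita-Schwinger type operators (domains as in the paper; formulas P^+D_x resp. P^-D_x).\<close>
definition R :: "nat \<Rightarrow> ('n::{finite,linorder}) clfun \<Rightarrow> 'n clfun" where
  "R k f = Pp k (Dx f)"
definition T :: "nat \<Rightarrow> ('n::{finite,linorder}) clfun \<Rightarrow> 'n clfun" where
  "T k f = Pp k (Dx f)"
definition Tstar :: "nat \<Rightarrow> ('n::{finite,linorder}) clfun \<Rightarrow> 'n clfun" where
  "Tstar k f = Pm k (Dx f)"
definition Q :: "nat \<Rightarrow> ('n::{finite,linorder}) clfun \<Rightarrow> 'n clfun" where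
  "Q k f = Pm k (Dx f)"

definition D2 :: "nat \<Rightarrow> ('n::{finite,linorder}) clfun \<Rightarrow> 'n clfun" where
  "D2 k f = (\<lambda>x u. Lapx f x u
     - (4 / (real CARD('n) + 2 * real k - 2)) *\<^sub>R uDx (DuDx f) x u
     + (4 / ((real CARD('n) + 2 * real k - 2) * (real CARD('n) + 2 * real k - 4)))
         *\<^sub>R ((norm u)\<^sup>2 *\<^sub>R DuDx (DuDx f) x u))"

end

theory Submission
  imports Defs
begin

definition nlt :: "'n::{finite,linorder} \<Rightarrow> 'n set \<Rightarrow> nat" where
  "nlt i B = card {b\<in>B. b < i}"

lemma cl_sign_single:
  fixes i :: "'n::{finite,linorder}"
  shows "cl_sign {i} B = (-1) ^ nlt i B * (if i \<in> B then -1 else 1)"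
proof -
  have "{(a,b). a \<in> {i} \<and> b \<in> B \<and> b < a} = (\<lambda>b. (i,b)) ` {b\<in>B. b < i}" by auto
  then have c: "card {(a,b). a \<in> {i} \<and> b \<in> B \<and> b < a} = nlt i B"
    unfolding nlt_def by (simp add: card_image inj_on_def)
  show ?thesis unfolding cl_sign_def c by (auto simp: power_add)
qed

lemma cl_e_comp: "cl_e i $ A = (if A = {i} then 1 else 0)"
  unfolding cl_e_def by simp

lemma cl_e_mult_comp:
  fixes i :: "'n::{finite,linorder}"
  shows "(cl_e i \<odot> g) $ C = cl_sign {i} (sym_diff {i} C) * g $ (sym_diff {i} C)"
proof -
  have "(cl_e i \<odot> g) $ C = (\<Sum>A\<in>UNIV. \<Sum>B\<in>UNIV.
      if sym_diff A B = C then cl_sign A B * (if A = {i} then 1 else 0) * (g $ B) else 0)"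
    unfolding cl_mult_def cl_e_comp by simp
  also have "\<dots> = (\<Sum>A\<in>UNIV. if A = {i} then (\<Sum>B\<in>UNIV. if sym_diff {i} B = C then cl_sign {i} B * (g $ B) else 0) else 0)"
    by (rule sum.cong) (auto cong: if_cong)
  also have "\<dots> = (\<Sum>B\<in>UNIV. if sym_diff {i} B = C then cl_sign {i} B * (g $ B) else 0)"
    by simp
  also have "\<dots> = (\<Sum>B\<in>UNIV. if B = sym_diff {i} C then cl_sign {i} B * (g $ B) else 0)"
    by (rule sum.cong) auto
  also have "\<dots> = cl_sign {i} (sym_diff {i} C) * g $ (sym_diff {i} C)"
    by simp
  finally show ?thesis .
qed

lemma sd_sd: "sym_diff {i} (sym_diff {i} C) = C" by auto
lemma sd_comm: "sym_diff {i} (sym_diff {j} C) = sym_diff {j} (sym_diff {i} C)" by auto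

lemma nlt_sd_self: "nlt i (sym_diff {i} C) = nlt i C"
  unfolding nlt_def by (rule arg_cong[where f=card]) auto

lemma nlt_sd_gt: "j > i \<Longrightarrow> nlt i (sym_diff {j} C) = nlt i C"
  unfolding nlt_def by (rule arg_cong[where f=card]) auto

lemma card_sd_parity:
  fixes X :: "'a set"
  assumes "finite X"
  shows "(-1::complex) ^ card (sym_diff {i} X) = - ((-1) ^ card X)"
proof (cases "i \<in> X")
  case True
  then have "sym_diff {i} X = X - {i}" by auto
  moreover have "card X = Suc (card (X - {i}))" using True assms
    by (metis card_Suc_Diff1)
  ultimately show ?thesis by simp
next
  case False
  then have "sym_diff {i} X = insert i X" by auto
  then show ?thesis using False assms by simp
qed

lemma nlt_sd_lt:
  fixes i j :: "'n::{finite,linorder}"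
  assumes "j < i"
  shows "(-1::complex) ^ nlt i (sym_diff {j} C) = - ((-1) ^ nlt i C)"
proof -
  have "{b\<in>sym_diff {j} C. b < i} = sym_diff {j} {b\<in>C. b < i}" using assms by auto
  then show ?thesis unfolding nlt_def using card_sd_parity[of "{b\<in>C. b < i}" j] by simp
qed

lemma e_e_same:
  fixes i :: "'n::{finite,linorder}"
  shows "cl_e i \<odot> (cl_e i \<odot> g) = - g"
proof (subst vec_eq_iff, intro allI)
  fix C
  have "(cl_e i \<odot> (cl_e i \<odot> g)) $ C = cl_sign {i} (sym_diff {i} C) * cl_sign {i} C * g $ C"
    by (simp add: cl_e_mult_comp sd_sd)
  also have "\<dots> = - g $ C"
    by (simp add: cl_sign_single nlt_sd_self power_mult_distrib[symmetric] flip: power_add)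
  finally show "(cl_e i \<odot> (cl_e i \<odot> g)) $ C = (- g) $ C" by simp
qed


lemma e_e_diff:
  fixes i j :: "'n::{finite,linorder}"
  assumes "i \<noteq> j"
  shows "cl_e i \<odot> (cl_e j \<odot> g) = - (cl_e j \<odot> (cl_e i \<odot> g))"
proof -
  have key: "cl_sign {i} (sym_diff {i} C) * cl_sign {j} (sym_diff {j} (sym_diff {i} C))
      = - (cl_sign {j} (sym_diff {j} C) * cl_sign {i} (sym_diff {i} (sym_diff {j} C)))"
    if "j < i" for i j :: 'n and C
  proof -
    have ij: "i \<noteq> j" using that by auto
    show ?thesis
      using that ij
      by (simp add: cl_sign_single nlt_sd_self nlt_sd_gt nlt_sd_lt)
  qed
  show ?thesis
  proof (subst vec_eq_iff, intro allI)
    fix C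
    have X: "sym_diff {i} (sym_diff {j} C) = sym_diff {j} (sym_diff {i} C)" by (rule sd_comm)
    have lhs: "(cl_e i \<odot> (cl_e j \<odot> g)) $ C = cl_sign {i} (sym_diff {i} C) * cl_sign {j} (sym_diff {j} (sym_diff {i} C)) * g $ (sym_diff {j} (sym_diff {i} C))"
      by (simp add: cl_e_mult_comp)
    have rhs: "(cl_e j \<odot> (cl_e i \<odot> g)) $ C = cl_sign {j} (sym_diff {j} C) * cl_sign {i} (sym_diff {i} (sym_diff {j} C)) * g $ (sym_diff {j} (sym_diff {i} C))"
      by (simp add: cl_e_mult_comp X)
    have "cl_sign {i} (sym_diff {i} C) * cl_sign {j} (sym_diff {j} (sym_diff {i} C))
      = - (cl_sign {j} (sym_diff {j} C) * cl_sign {i} (sym_diff {i} (sym_diff {j} C)))"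
    proof (cases "j < i")
      case True
      then show ?thesis using key[OF True, of C] by simp
    next
      case False
      then have "i < j" using assms by auto
      then show ?thesis using key[OF \<open>i < j\<close>, of C] by simp
    qed
    then show "(cl_e i \<odot> (cl_e j \<odot> g)) $ C = (- (cl_e j \<odot> (cl_e i \<odot> g))) $ C"
      unfolding lhs vector_uminus_component rhs by simp
  qed
qed

lemma e_e_anti:
  fixes i j :: "'n::{finite,linorder}"
  shows "cl_e i \<odot> (cl_e j \<odot> g) + cl_e j \<odot> (cl_e i \<odot> g) = (if i = j then -2 else 0) *\<^sub>R g"
  using e_e_diff[of i j g] e_e_same[of i g] by (cases "i = j") (auto simp: scaleR_2)

definition cl_coef :: "'n::{finite,linorder} set \<Rightarrow> 'n set \<Rightarrow> 'n set \<Rightarrow> complex" where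
  "cl_coef A B C = (if sym_diff A B = C then cl_sign A B else 0)"

lemma cl_mult_comp: "(a \<odot> b) $ C = (\<Sum>A\<in>UNIV. \<Sum>B\<in>UNIV. a$A * b$B * cl_coef A B C)"
  unfolding cl_mult_def cl_coef_def by (auto intro!: sum.cong)

lemma cl_mult_add_right: "a \<odot> (x + y) = a \<odot> x + a \<odot> y"
  by (simp add: vec_eq_iff cl_mult_comp ring_distribs sum.distrib)
lemma cl_mult_add_left: "(x + y) \<odot> a = x \<odot> a + y \<odot> a"
  by (simp add: vec_eq_iff cl_mult_comp ring_distribs sum.distrib)
lemma cl_mult_scale_right: "a \<odot> (r *\<^sub>R x) = r *\<^sub>R (a \<odot> x)"
  by (simp add: vec_eq_iff cl_mult_comp vector_scaleR_component scaleR_conv_of_real[where 'a=complex] sum_distrib_left mult_ac)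
lemma cl_mult_scale_left: "(r *\<^sub>R x) \<odot> a = r *\<^sub>R (x \<odot> a)"
  by (simp add: vec_eq_iff cl_mult_comp vector_scaleR_component scaleR_conv_of_real[where 'a=complex] sum_distrib_left mult_ac)
lemma cl_mult_zero_right: "a \<odot> 0 = 0"
  by (simp add: vec_eq_iff cl_mult_comp)
lemma cl_mult_zero_left: "0 \<odot> a = 0"
  by (simp add: vec_eq_iff cl_mult_comp)
lemma cl_mult_minus_right: "a \<odot> (- x) = - (a \<odot> x)"
  by (simp add: vec_eq_iff cl_mult_comp sum_negf)
lemma cl_mult_diff_right: "a \<odot> (x - y) = a \<odot> x - a \<odot> y"
  by (simp add: vec_eq_iff cl_mult_comp sum_subtractf ring_distribs)
lemma cl_mult_sum_right: "a \<odot> (\<Sum>i\<in>S. x i) = (\<Sum>i\<in>S. a \<odot> x i)"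
  by (induction S rule: infinite_finite_induct) (auto simp: cl_mult_zero_right cl_mult_add_right)
lemma cl_mult_sum_left: "(\<Sum>i\<in>S. x i) \<odot> a = (\<Sum>i\<in>S. x i \<odot> a)"
  by (induction S rule: infinite_finite_induct) (auto simp: cl_mult_zero_left cl_mult_add_left)

lemma cl_mult_blin: "bounded_linear (\<lambda>y. a \<odot> y)"
proof -
  have "linear (\<lambda>y. a \<odot> y)"
    by (rule linearI) (simp_all add: cl_mult_add_right cl_mult_scale_right)
  then show ?thesis by (simp add: linear_conv_bounded_linear)
qed

lemma cl_vec_mult: "cl_vec u \<odot> g = (\<Sum>i\<in>UNIV. (u $ i) *\<^sub>R (cl_e i \<odot> g))"
  unfolding cl_vec_def by (simp add: cl_mult_sum_left cl_mult_scale_left)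

lemma smooth_diff: "smooth G \<Longrightarrow> G differentiable (at x)"
  by (erule smooth.cases) auto

lemma smooth_deriv: "smooth G \<Longrightarrow> smooth (\<lambda>x. frechet_derivative G (at x) v)"
  by (erule smooth.cases) auto

lemma smooth_hasd: "smooth G \<Longrightarrow> (G has_derivative frechet_derivative G (at x)) (at x)"
  using smooth_diff frechet_derivative_works by blast

lemma smooth_blin:
  assumes L: "bounded_linear L" and G: "smooth G"
  shows "smooth (\<lambda>p. L (G p))"
proof (rule smooth.coinduct[where X = "\<lambda>H. \<exists>G. smooth G \<and> H = (\<lambda>p. L (G p))"])
  show "\<exists>G'. smooth G' \<and> (\<lambda>p. L (G p)) = (\<lambda>p. L (G' p))" using G by blast
next
  fix H assume "\<exists>G. smooth G \<and> H = (\<lambda>p. L (G p))"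
  then obtain G where G: "smooth G" and H: "H = (\<lambda>p. L (G p))" by blast
  have hd: "(H has_derivative (\<lambda>v. L (frechet_derivative G (at x) v))) (at x)" for x
    unfolding H by (rule bounded_linear.has_derivative[OF L smooth_hasd[OF G]])
  have fd: "frechet_derivative H (at x) v = L (frechet_derivative G (at x) v)" for x v
    using frechet_derivative_at[OF hd[of x]] by metis
  show "\<exists>g. H = g \<and> (\<forall>x. g differentiable at x) \<and>
         (\<forall>v. (\<exists>G. smooth G \<and> (\<lambda>x. frechet_derivative g (at x) v) = (\<lambda>p. L (G p))) \<or>
              smooth (\<lambda>x. frechet_derivative g (at x) v))"
    using hd fd smooth_deriv[OF G] unfolding differentiable_def by blast
qed

lemma smooth_add:
  assumes G: "smooth G" and H: "smooth H"
  shows "smooth (\<lambda>p. G p + H p)"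
proof (rule smooth.coinduct[where X = "\<lambda>K. \<exists>G H. smooth G \<and> smooth H \<and> K = (\<lambda>p. G p + H p)"])
  show "\<exists>G' H'. smooth G' \<and> smooth H' \<and> (\<lambda>p. G p + H p) = (\<lambda>p. G' p + H' p)" using G H by blast
next
  fix K assume "\<exists>G H. smooth G \<and> smooth H \<and> K = (\<lambda>p. G p + H p)"
  then obtain G H where G: "smooth G" and H: "smooth H" and K: "K = (\<lambda>p. G p + H p)" by blast
  have hd: "(K has_derivative (\<lambda>v. frechet_derivative G (at x) v + frechet_derivative H (at x) v)) (at x)" for x
    unfolding K by (rule has_derivative_add[OF smooth_hasd[OF G] smooth_hasd[OF H]])
  have fd: "frechet_derivative K (at x) v = frechet_derivative G (at x) v + frechet_derivative H (at x) v" for x v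
    using frechet_derivative_at[OF hd[of x]] by metis
  show "\<exists>g. K = g \<and> (\<forall>x. g differentiable at x) \<and>
         (\<forall>v. (\<exists>G H. smooth G \<and> smooth H \<and> (\<lambda>x. frechet_derivative g (at x) v) = (\<lambda>p. G p + H p)) \<or>
              smooth (\<lambda>x. frechet_derivative g (at x) v))"
    using hd fd smooth_deriv[OF G] smooth_deriv[OF H] unfolding differentiable_def by blast
qed

lemma smooth_const: "smooth (\<lambda>p::'a::real_normed_vector. c::'b::real_normed_vector)"
proof (rule smooth.coinduct[where X = "\<lambda>K. \<exists>c. K = (\<lambda>p. c)"])
  show "\<exists>c'. (\<lambda>p. c) = (\<lambda>p. c')" by blast
next
  fix K :: "'a \<Rightarrow> 'b" assume "\<exists>c. K = (\<lambda>p. c)"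
  then obtain c where K: "K = (\<lambda>p. c)" by blast
  have hd: "(K has_derivative (\<lambda>v. 0)) (at x)" for x unfolding K by simp
  have fd: "frechet_derivative K (at x) v = 0" for x v
    using frechet_derivative_at[OF hd[of x]] by metis
  show "\<exists>g. K = g \<and> (\<forall>x. g differentiable at x) \<and>
         (\<forall>v. (\<exists>c. (\<lambda>x. frechet_derivative g (at x) v) = (\<lambda>p. c)) \<or>
              smooth (\<lambda>x. frechet_derivative g (at x) v))"
    using hd fd unfolding differentiable_def by blast
qed

lemma smooth_sum: "finite S \<Longrightarrow> (\<And>i. i \<in> S \<Longrightarrow> smooth (G i)) \<Longrightarrow> smooth (\<lambda>p. \<Sum>i\<in>S. G i p)"
  by (induction S rule: finite_induct) (auto intro: smooth_add smooth_const)

lemma smooth_scale: "smooth G \<Longrightarrow> smooth (\<lambda>p. c *\<^sub>R G p)"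
  by (rule smooth_blin[OF bounded_linear_scaleR_right])

lemma smooth_minus: "smooth G \<Longrightarrow> smooth (\<lambda>p. - G p)"
  by (rule smooth_blin[OF bounded_linear_minus[OF bounded_linear_ident]])

lemma blin_snd_j: "bounded_linear (\<lambda>p::('a::real_normed_vector) \<times> (real^'n). snd p $ j)"
  by (rule bounded_linear_compose[OF bounded_linear_vec_nth bounded_linear_snd])

lemma smooth_mult_snd:
  fixes G :: "('a::real_normed_vector) \<times> (real^'n) \<Rightarrow> 'b::real_normed_vector"
  assumes G: "smooth G"
  shows "smooth (\<lambda>p. (snd p $ j) *\<^sub>R G p)"
proof (rule smooth.coinduct[where X = "\<lambda>K. \<exists>G1 G2. smooth G1 \<and> smooth G2 \<and> K = (\<lambda>p. G1 p + (snd p $ j) *\<^sub>R G2 p)"])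
  show "\<exists>G1 G2. smooth G1 \<and> smooth G2 \<and> (\<lambda>p. (snd p $ j) *\<^sub>R G p) = (\<lambda>p. G1 p + (snd p $ j) *\<^sub>R G2 p)"
    by (rule exI[of _ "\<lambda>p. 0"], rule exI[of _ G]) (simp add: G smooth_const)
next
  fix K :: "'a \<times> (real^'n) \<Rightarrow> 'b" assume "\<exists>G1 G2. smooth G1 \<and> smooth G2 \<and> K = (\<lambda>p. G1 p + (snd p $ j) *\<^sub>R G2 p)"
  then obtain G1 G2 where G1: "smooth G1" and G2: "smooth G2" and K: "K = (\<lambda>p. G1 p + (snd p $ j) *\<^sub>R G2 p)" by blast

  have sj: "((\<lambda>p. snd p $ j) has_derivative (\<lambda>p. snd p $ j)) (at x)" for x :: "'a \<times> (real^'n)"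
    by (rule bounded_linear.has_derivative[OF blin_snd_j has_derivative_ident])
  have hd: "(K has_derivative (\<lambda>v. frechet_derivative G1 (at x) v +
      ((snd x $ j) *\<^sub>R frechet_derivative G2 (at x) v + (snd v $ j) *\<^sub>R G2 x))) (at x)" for x
    unfolding K by (intro has_derivative_add smooth_hasd[OF G1] has_derivative_scaleR smooth_hasd[OF G2]) (rule sj)
  have fd: "frechet_derivative K (at x) v = (frechet_derivative G1 (at x) v + (snd v $ j) *\<^sub>R G2 x)
       + (snd x $ j) *\<^sub>R frechet_derivative G2 (at x) v" for x v
  proof -
    have "frechet_derivative K (at x) = (\<lambda>v. frechet_derivative G1 (at x) v +
      ((snd x $ j) *\<^sub>R frechet_derivative G2 (at x) v + (snd v $ j) *\<^sub>R G2 x))"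
      using frechet_derivative_at[OF hd[of x]] by simp
    then show ?thesis by (simp add: algebra_simps)
  qed
  have s1: "smooth (\<lambda>x. frechet_derivative G1 (at x) v + (snd v $ j) *\<^sub>R G2 x)" for v
    by (intro smooth_add smooth_deriv G1 smooth_scale G2)
  show "\<exists>g. K = g \<and> (\<forall>x. g differentiable at x) \<and>
         (\<forall>v. (\<exists>G1 G2. smooth G1 \<and> smooth G2 \<and> (\<lambda>x. frechet_derivative g (at x) v) = (\<lambda>p. G1 p + (snd p $ j) *\<^sub>R G2 p)) \<or>
              smooth (\<lambda>x. frechet_derivative g (at x) v))"
  proof -
    have d: "\<forall>x. K differentiable at x" using hd unfolding differentiable_def by blast
    have e: "\<exists>G1 G2. smooth G1 \<and> smooth G2 \<and> (\<lambda>x. frechet_derivative K (at x) v) = (\<lambda>p. G1 p + (snd p $ j) *\<^sub>R G2 p)" for v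
      using s1[of v] smooth_deriv[OF G2, of v] fd[of _ v] by (intro exI[of _ "\<lambda>x. frechet_derivative G1 (at x) v + (snd v $ j) *\<^sub>R G2 x"] exI[of _ "\<lambda>x. frechet_derivative G2 (at x) v"]) auto
    show ?thesis using d e by blast
  qed
qed

lemma fd_linear: "smooth G \<Longrightarrow> linear (frechet_derivative G (at q))"
  using smooth_hasd has_derivative_linear by blast

lemma schwarz_lim:
  fixes G :: "'a::real_normed_vector \<Rightarrow> 'b::real_inner"
  assumes G: "smooth G"
  shows "((\<lambda>h. (1 / h\<^sup>2) *\<^sub>R (G (p + h *\<^sub>R v + h *\<^sub>R w) - G (p + h *\<^sub>R v) - G (p + h *\<^sub>R w) + G p))
     \<longlongrightarrow> frechet_derivative (\<lambda>q. frechet_derivative G (at q) v) (at p) w) (at_right 0)"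
proof -
  define Gv where "Gv = (\<lambda>q. frechet_derivative G (at q) v)"
  define Hv where "Hv = frechet_derivative Gv (at p)"
  have sGv: "smooth Gv" unfolding Gv_def using smooth_deriv[OF G] .
  have hdHv: "(Gv has_derivative Hv) (at p)" unfolding Hv_def using smooth_hasd[OF sGv] .
  have linHv: "linear Hv" using hdHv has_derivative_linear by blast
  define c where "c = norm v + norm w"
  have c0: "c \<ge> 0" unfolding c_def by simp
  define S where "S = (\<lambda>h. G (p + h *\<^sub>R v + h *\<^sub>R w) - G (p + h *\<^sub>R v) - G (p + h *\<^sub>R w) + G p)"
  have main: "((\<lambda>h. (1 / h\<^sup>2) *\<^sub>R S h) \<longlongrightarrow> Hv w) (at_right 0)"
  proof (subst tendsto_iff, intro allI impI)
    fix e :: real assume e: "e > 0"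
    define \<epsilon> where "\<epsilon> = e / (4 * (c + 1))"
    have eps: "\<epsilon> > 0" unfolding \<epsilon>_def using e c0 by simp
    obtain d where d: "d > 0" and dd: "\<And>y. norm (y - p) < d \<Longrightarrow> norm (Gv y - Gv p - Hv (y - p)) \<le> \<epsilon> * norm (y - p)"
      using hdHv eps unfolding has_derivative_at_alt by blast
    have bnd: "norm (S h - (h * h) *\<^sub>R Hv w) \<le> 2 * \<epsilon> * c * (h * h)" if h0: "0 < h" and hd: "h * (c + 1) < d" for h
    proof -
      define \<phi> where "\<phi> = (\<lambda>t. G (p + (t * h) *\<^sub>R v + h *\<^sub>R w) - G (p + (t * h) *\<^sub>R v) - (t * h * h) *\<^sub>R Hv w)"
      define \<phi>' where "\<phi>' = (\<lambda>t s. frechet_derivative G (at (p + (t * h) *\<^sub>R v + h *\<^sub>R w)) ((s * h) *\<^sub>R v)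
           - frechet_derivative G (at (p + (t * h) *\<^sub>R v)) ((s * h) *\<^sub>R v) - (s * h * h) *\<^sub>R Hv w)"
      have hd1: "((\<lambda>t. p + (t * h) *\<^sub>R v + h *\<^sub>R w) has_derivative (\<lambda>s. (s * h) *\<^sub>R v)) (at t)" for t
        by (auto intro!: derivative_eq_intros simp: algebra_simps)
      have hd2: "((\<lambda>t. p + (t * h) *\<^sub>R v) has_derivative (\<lambda>s. (s * h) *\<^sub>R v)) (at t)" for t
        by (auto intro!: derivative_eq_intros simp: algebra_simps)
      have hd3: "((\<lambda>t. (t * h * h) *\<^sub>R Hv w) has_derivative (\<lambda>s. (s * h * h) *\<^sub>R Hv w)) (at t)" for t
        by (auto intro!: derivative_eq_intros simp: algebra_simps)
      have hdphi: "(\<phi> has_derivative \<phi>' t) (at t)" for t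
        unfolding \<phi>_def \<phi>'_def
        by (intro has_derivative_diff has_derivative_compose[OF hd1 smooth_hasd[OF G]]
              has_derivative_compose[OF hd2 smooth_hasd[OF G]] hd3)
      have cont: "continuous_on {0..1} \<phi>"
        using hdphi has_derivative_continuous by (blast intro: continuous_at_imp_continuous_on)
      obtain t where t: "t \<in> {0<..<1}" and mv: "norm (\<phi> 1 - \<phi> 0) \<le> norm (\<phi>' t (1 - 0))"
        using mvt_general[OF zero_less_one cont hdphi] by blast
      have e1: "\<phi> 1 - \<phi> 0 = S h - (h * h) *\<^sub>R Hv w"
        unfolding \<phi>_def S_def by (simp add: algebra_simps)
      define z1 where "z1 = (t * h) *\<^sub>R v + h *\<^sub>R w"
      define z2 where "z2 = (t * h) *\<^sub>R v"
      have nz1: "norm z1 \<le> h * c"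
      proof -
        have "norm z1 \<le> norm ((t * h) *\<^sub>R v) + norm (h *\<^sub>R w)" unfolding z1_def by (rule norm_triangle_ineq)
        also have "\<dots> = t * h * norm v + h * norm w" using t h0 by simp
        also have "\<dots> \<le> h * norm v + h * norm w" using t h0 by (simp add: mult_right_mono)
        finally show ?thesis unfolding c_def by (simp add: algebra_simps)
      qed
      have nz2: "norm z2 \<le> h * c"
      proof -
        have "norm z2 = t * h * norm v" unfolding z2_def using t h0 by simp
        also have "\<dots> \<le> h * norm v" using t h0 by (simp add: mult_right_mono)
        also have "\<dots> \<le> h * c" unfolding c_def using h0 by simp
        finally show ?thesis .
      qed
      have hc: "h * c < d" using hd h0 by (simp add: algebra_simps)
      have b1: "norm (Gv (p + z1) - Gv p - Hv z1) \<le> \<epsilon> * (h * c)"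
        using dd[of "p + z1"] nz1 hc eps by (simp add: order_trans mult_left_mono)
      have b2: "norm (Gv (p + z2) - Gv p - Hv z2) \<le> \<epsilon> * (h * c)"
        using dd[of "p + z2"] nz2 hc eps by (simp add: order_trans mult_left_mono)
      have lin1: "frechet_derivative G (at q) (h *\<^sub>R v) = h *\<^sub>R Gv q" for q
        unfolding Gv_def using linear_scale[OF fd_linear[OF G]] by blast
      have "\<phi>' t (1 - 0) = h *\<^sub>R ((Gv (p + z1) - Gv p - Hv z1) - (Gv (p + z2) - Gv p - Hv z2))"
      proof -
        have "Hv z1 - Hv z2 = h *\<^sub>R Hv w" unfolding z1_def z2_def
          using linear_add[OF linHv] linear_scale[OF linHv] by simp
        then show ?thesis unfolding \<phi>'_def z1_def[symmetric] z2_def[symmetric]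
          by (simp add: lin1 algebra_simps z1_def z2_def)
      qed
      then have n: "norm (\<phi>' t (1 - 0)) = h * norm ((Gv (p + z1) - Gv p - Hv z1) - (Gv (p + z2) - Gv p - Hv z2))"
        using h0 by (simp only: norm_scaleR)
      have "norm ((Gv (p + z1) - Gv p - Hv z1) - (Gv (p + z2) - Gv p - Hv z2)) \<le> \<epsilon> * (h * c) + \<epsilon> * (h * c)"
        using b1 b2 norm_triangle_ineq4[of "Gv (p + z1) - Gv p - Hv z1" "Gv (p + z2) - Gv p - Hv z2"]
        by linarith
      then have "norm (\<phi>' t (1 - 0)) \<le> h * (\<epsilon> * (h * c) + \<epsilon> * (h * c))"
        unfolding n using h0 by (simp add: mult_left_mono)
      then show ?thesis using mv e1 by (simp add: algebra_simps)
    qed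
    show "\<forall>\<^sub>F h in at_right 0. dist ((1 / h\<^sup>2) *\<^sub>R S h) (Hv w) < e"
      unfolding eventually_at_right_field
    proof (intro exI[of _ "d / (c + 1)"] conjI allI impI)
      show "0 < d / (c + 1)" using d c0 by simp
      fix h :: real assume h0: "0 < h" and hlt: "h < d / (c + 1)"
      have hd: "h * (c + 1) < d" using hlt c0 by (simp add: field_simps)
      have "dist ((1 / h\<^sup>2) *\<^sub>R S h) (Hv w) = norm ((1 / (h * h)) *\<^sub>R (S h - (h * h) *\<^sub>R Hv w))"
        using h0 by (simp add: dist_norm power2_eq_square algebra_simps)
      also have "\<dots> = norm (S h - (h * h) *\<^sub>R Hv w) / (h * h)"
        using h0 by simp
      also have "\<dots> \<le> 2 * \<epsilon> * c"
        using bnd[OF h0 hd] h0 by (simp add: divide_le_eq)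
      also have "\<dots> < e"
        unfolding \<epsilon>_def using e c0 by (simp add: field_simps add_pos_nonneg)
      finally show "dist ((1 / h\<^sup>2) *\<^sub>R S h) (Hv w) < e" .
    qed
  qed
  then show ?thesis unfolding S_def Hv_def Gv_def .
qed

lemma schwarz:
  fixes G :: "'a::real_normed_vector \<Rightarrow> 'b::real_inner"
  assumes G: "smooth G"
  shows "frechet_derivative (\<lambda>q. frechet_derivative G (at q) v) (at p) w
       = frechet_derivative (\<lambda>q. frechet_derivative G (at q) w) (at p) v"
proof -
  have e: "(\<lambda>h. (1 / h\<^sup>2) *\<^sub>R (G (p + h *\<^sub>R v + h *\<^sub>R w) - G (p + h *\<^sub>R v) - G (p + h *\<^sub>R w) + G p))
    = (\<lambda>h. (1 / h\<^sup>2) *\<^sub>R (G (p + h *\<^sub>R w + h *\<^sub>R v) - G (p + h *\<^sub>R w) - G (p + h *\<^sub>R v) + G p))"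
    by (simp add: algebra_simps)
  show ?thesis
    using tendsto_unique[OF trivial_limit_at_right_real schwarz_lim[OF G, of p v w]
        schwarz_lim[OF G, of p w v, folded e]] by simp
qed

definition Gof :: "('n::{finite,linorder}) clfun \<Rightarrow> ((real,'n) vec \<times> (real,'n) vec \<Rightarrow> 'n cl)" where
  "Gof g = (\<lambda>p. g (fst p) (snd p))"

definition good :: "('n::{finite,linorder}) clfun \<Rightarrow> bool" where
  "good g \<longleftrightarrow> smooth (Gof g)"

definition Dv :: "(real,'n) vec \<times> (real,'n) vec \<Rightarrow> ('n::{finite,linorder}) clfun \<Rightarrow> 'n clfun" where
  "Dv v g = (\<lambda>x u. frechet_derivative (Gof g) (at (x, u)) v)"

lemma vd_line:
  assumes "G differentiable (at p)"
  shows "vector_derivative (\<lambda>t. G (p + t *\<^sub>R v)) (at 0) = frechet_derivative G (at p) v"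
proof -
  have hd: "(G has_derivative frechet_derivative G (at p)) (at p)"
    using assms frechet_derivative_works by blast
  have l: "((\<lambda>t::real. p + t *\<^sub>R v) has_derivative (\<lambda>t. t *\<^sub>R v)) (at 0)"
    by (auto intro!: derivative_eq_intros)
  have "((\<lambda>t. G (p + t *\<^sub>R v)) has_derivative (\<lambda>t. frechet_derivative G (at p) (t *\<^sub>R v))) (at 0)"
    using has_derivative_compose[OF l, of G] hd by simp
  moreover have "(\<lambda>t. frechet_derivative G (at p) (t *\<^sub>R v)) = (\<lambda>t. t *\<^sub>R frechet_derivative G (at p) v)"
    using linear_scale[OF has_derivative_linear[OF hd]] by auto
  ultimately have "((\<lambda>t. G (p + t *\<^sub>R v)) has_vector_derivative frechet_derivative G (at p) v) (at 0)"
    unfolding has_vector_derivative_def by simp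
  then show ?thesis by (rule vector_derivative_at)
qed

abbreviation "Xv i \<equiv> (axis i (1::real), 0::real^_)"
abbreviation "Uv i \<equiv> (0::real^_, axis i (1::real))"

lemma dx_Dv: "good g \<Longrightarrow> dx i g = Dv (Xv i) g"
proof (intro ext)
  fix x u assume g: "good g"
  have "dx i g x u = vector_derivative (\<lambda>t. Gof g ((x, u) + t *\<^sub>R Xv i)) (at 0)"
    unfolding dx_def pd_def Gof_def by simp
  also have "\<dots> = Dv (Xv i) g x u"
    unfolding Dv_def using vd_line smooth_diff g good_def by blast
  finally show "dx i g x u = Dv (Xv i) g x u" .
qed

lemma du_Dv: "good g \<Longrightarrow> du i g = Dv (Uv i) g"
proof (intro ext)
  fix x u assume g: "good g"
  have "du i g x u = vector_derivative (\<lambda>t. Gof g ((x, u) + t *\<^sub>R Uv i)) (at 0)"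
    unfolding du_def pd_def Gof_def by simp
  also have "\<dots> = Dv (Uv i) g x u"
    unfolding Dv_def using vd_line smooth_diff g good_def by blast
  finally show "du i g x u = Dv (Uv i) g x u" .
qed

lemma Gof_Dv: "Gof (Dv v g) = (\<lambda>p. frechet_derivative (Gof g) (at p) v)"
  unfolding Gof_def Dv_def by simp

lemma good_Dv[simp]: "good g \<Longrightarrow> good (Dv v g)"
  unfolding good_def Gof_Dv by (rule smooth_deriv)

lemma Dv_comm: "good g \<Longrightarrow> Dv v (Dv w g) = Dv w (Dv v g)"
proof (intro ext)
  fix x u assume "good g"
  then have s: "smooth (Gof g)" unfolding good_def .
  show "Dv v (Dv w g) x u = Dv w (Dv v g) x u"
    unfolding Dv_def[of v "Dv w g"] Dv_def[of w "Dv v g"] Gof_Dv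
    using schwarz[OF s, of w "(x,u)" v] by (simp add: Dv_def)
qed

lemma good_add[simp]: "good g \<Longrightarrow> good h \<Longrightarrow> good (\<lambda>x u. g x u + h x u)"
  unfolding good_def Gof_def using smooth_add by auto

lemma good_blin: "bounded_linear L \<Longrightarrow> good g \<Longrightarrow> good (\<lambda>x u. L (g x u))"
  unfolding good_def Gof_def using smooth_blin by auto

lemma good_scale[simp]: "good g \<Longrightarrow> good (\<lambda>x u. c *\<^sub>R g x u)"
  using good_blin[OF bounded_linear_scaleR_right] by blast

lemma good_minus[simp]: "good g \<Longrightarrow> good (\<lambda>x u. - g x u)"
  using good_blin[OF bounded_linear_minus[OF bounded_linear_ident]] by blast

lemma good_diff[simp]: "good g \<Longrightarrow> good h \<Longrightarrow> good (\<lambda>x u. g x u - h x u)"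
  using good_add[of g "\<lambda>x u. - h x u"] by simp

lemma good_cl[simp]: "good g \<Longrightarrow> good (\<lambda>x u. a \<odot> g x u)"
  using good_blin[OF cl_mult_blin] by blast

lemma good_zero[simp]: "good (\<lambda>x u. 0)"
  unfolding good_def Gof_def using smooth_const by auto

lemma good_sum[simp]: "(\<And>i. good (g i)) \<Longrightarrow> good (\<lambda>x u. \<Sum>i\<in>S. g i x u)"
proof (induction S rule: infinite_finite_induct)
  case (insert a F) then show ?case using good_add[of "g a" "\<lambda>x u. \<Sum>i\<in>F. g i x u"] by simp
qed simp_all

lemma good_mu[simp]: "good g \<Longrightarrow> good (\<lambda>x u. (u $ j) *\<^sub>R g x u)"
  unfolding good_def Gof_def using smooth_mult_snd by auto

lemma fd_eq: "(F has_derivative F') (at p) \<Longrightarrow> frechet_derivative F (at p) v = F' v"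
  using frechet_derivative_at by metis

lemma Dv_add: "good g \<Longrightarrow> good h \<Longrightarrow> Dv v (\<lambda>x u. g x u + h x u) = (\<lambda>x u. Dv v g x u + Dv v h x u)"
  unfolding Dv_def good_def
  by (intro ext fd_eq, unfold Gof_def, rule has_derivative_add[OF smooth_hasd smooth_hasd, unfolded Gof_def])
     (simp_all add: Gof_def)


lemma Dv_blin: "bounded_linear L \<Longrightarrow> good g \<Longrightarrow> Dv v (\<lambda>x u. L (g x u)) = (\<lambda>x u. L (Dv v g x u))"
  unfolding Dv_def good_def
  by (intro ext fd_eq, unfold Gof_def, rule bounded_linear.has_derivative[OF _ smooth_hasd, unfolded Gof_def])
     (simp_all add: Gof_def)

lemma Dv_scale: "good g \<Longrightarrow> Dv v (\<lambda>x u. c *\<^sub>R g x u) = (\<lambda>x u. c *\<^sub>R Dv v g x u)"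
  by (rule Dv_blin[OF bounded_linear_scaleR_right])

lemma Dv_minus: "good g \<Longrightarrow> Dv v (\<lambda>x u. - g x u) = (\<lambda>x u. - Dv v g x u)"
  by (rule Dv_blin[OF bounded_linear_minus[OF bounded_linear_ident]])

lemma Dv_cl: "good g \<Longrightarrow> Dv v (\<lambda>x u. a \<odot> g x u) = (\<lambda>x u. a \<odot> Dv v g x u)"
  by (rule Dv_blin[OF cl_mult_blin])

lemma Dv_diff: "good g \<Longrightarrow> good h \<Longrightarrow> Dv v (\<lambda>x u. g x u - h x u) = (\<lambda>x u. Dv v g x u - Dv v h x u)"
  using Dv_add[of g "\<lambda>x u. - h x u" v] Dv_minus[of h v] by simp

lemma Dv_zero: "Dv v (\<lambda>x u. 0) = (\<lambda>x u. 0)"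
  using Dv_scale[OF good_zero, of v 0] by simp

lemma Dv_sum: "(\<And>i. good (g i)) \<Longrightarrow> Dv v (\<lambda>x u. \<Sum>i\<in>S. g i x u) = (\<lambda>x u. \<Sum>i\<in>S. Dv v (g i) x u)"
proof (induction S rule: infinite_finite_induct)
  case (insert a F) then show ?case using Dv_add[of "g a" "\<lambda>x u. \<Sum>i\<in>F. g i x u" v] by simp
qed (simp_all add: Dv_zero)

lemma Dv_mu: fixes g :: "('n::{finite,linorder}) clfun" shows "good g \<Longrightarrow> Dv v (\<lambda>x u. (u $ j) *\<^sub>R g x u) = (\<lambda>x u. (snd v $ j) *\<^sub>R g x u + (u $ j) *\<^sub>R Dv v g x u)"
proof (intro ext)
  fix x u :: "(real,'n) vec" assume "good g"
  then have s: "smooth (Gof g)" unfolding good_def .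
  have sj: "((\<lambda>p. snd p $ j) has_derivative (\<lambda>p. snd p $ j)) (at (x,u))"
    by (rule bounded_linear.has_derivative[OF blin_snd_j has_derivative_ident])
  have "((\<lambda>p. (snd p $ j) *\<^sub>R Gof g p) has_derivative
     (\<lambda>v. (snd (x,u) $ j) *\<^sub>R frechet_derivative (Gof g) (at (x,u)) v + (snd v $ j) *\<^sub>R Gof g (x,u))) (at (x,u))"
    by (rule has_derivative_scaleR[OF sj smooth_hasd[OF s]])
  then have "frechet_derivative (\<lambda>p. (snd p $ j) *\<^sub>R Gof g p) (at (x,u)) v = (snd (x,u) $ j) *\<^sub>R frechet_derivative (Gof g) (at (x,u)) v + (snd v $ j) *\<^sub>R Gof g (x,u)"
    by (rule fd_eq)
  then show "Dv v (\<lambda>x u. (u $ j) *\<^sub>R g x u) x u = (snd v $ j) *\<^sub>R g x u + (u $ j) *\<^sub>R Dv v g x u"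
    unfolding Dv_def by (simp add: Gof_def)
qed

definition Mo :: "('n::{finite,linorder}) clfun \<Rightarrow> 'n clfun" where
  "Mo g = (\<lambda>x u. cl_vec u \<odot> g x u)"
definition Eo :: "('n::{finite,linorder}) clfun \<Rightarrow> 'n clfun" where
  "Eo g = (\<lambda>x u. \<Sum>i\<in>UNIV. (u $ i) *\<^sub>R du i g x u)"
definition Lo :: "('n::{finite,linorder}) clfun \<Rightarrow> 'n clfun" where
  "Lo g = (\<lambda>x u. \<Sum>i\<in>UNIV. du i (du i g) x u)"

lemma Mo_e: "Mo g x u = (\<Sum>i\<in>UNIV. (u $ i) *\<^sub>R (cl_e i \<odot> g x u))"
  unfolding Mo_def cl_vec_mult ..

lemma Mo_e': "Mo g = (\<lambda>x u. \<Sum>i\<in>UNIV. (u $ i) *\<^sub>R (cl_e i \<odot> g x u))"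
  using Mo_e by blast

lemma Dx_e: "good g \<Longrightarrow> Dx g = (\<lambda>x u. \<Sum>i\<in>UNIV. cl_e i \<odot> Dv (Xv i) g x u)"
  unfolding Dx_def by (simp add: dx_Dv)
lemma Du_e: "good g \<Longrightarrow> Du g = (\<lambda>x u. \<Sum>i\<in>UNIV. cl_e i \<odot> Dv (Uv i) g x u)"
  unfolding Du_def by (simp add: du_Dv)
lemma uDx_e: "good g \<Longrightarrow> uDx g = (\<lambda>x u. \<Sum>i\<in>UNIV. (u $ i) *\<^sub>R Dv (Xv i) g x u)"
  unfolding uDx_def by (simp add: dx_Dv)
lemma DuDx_e: "good g \<Longrightarrow> DuDx g = (\<lambda>x u. \<Sum>i\<in>UNIV. Dv (Uv i) (Dv (Xv i) g) x u)"
  unfolding DuDx_def by (simp add: dx_Dv du_Dv)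
lemma Eo_e: "good g \<Longrightarrow> Eo g = (\<lambda>x u. \<Sum>i\<in>UNIV. (u $ i) *\<^sub>R Dv (Uv i) g x u)"
  unfolding Eo_def by (simp add: du_Dv)
lemma Lo_e: "good g \<Longrightarrow> Lo g = (\<lambda>x u. \<Sum>i\<in>UNIV. Dv (Uv i) (Dv (Uv i) g) x u)"
  unfolding Lo_def by (simp add: du_Dv)
lemma Lapx_e: "good g \<Longrightarrow> Lapx g = (\<lambda>x u. \<Sum>i\<in>UNIV. Dv (Xv i) (Dv (Xv i) g) x u)"
  unfolding Lapx_def by (simp add: dx_Dv)

lemma good_Mo[simp]: "good g \<Longrightarrow> good (Mo g)"
  unfolding Mo_e' by simp
lemma good_Dx[simp]: "good g \<Longrightarrow> good (Dx g)"
  by (simp add: Dx_e)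
lemma good_Du[simp]: "good g \<Longrightarrow> good (Du g)"
  by (simp add: Du_e)
lemma good_uDx[simp]: "good g \<Longrightarrow> good (uDx g)"
  by (simp add: uDx_e)
lemma good_DuDx[simp]: "good g \<Longrightarrow> good (DuDx g)"
  by (simp add: DuDx_e)
lemma good_Eo[simp]: "good g \<Longrightarrow> good (Eo g)"
  by (simp add: Eo_e)
lemma good_Lo[simp]: "good g \<Longrightarrow> good (Lo g)"
  by (simp add: Lo_e)

lemma axis_sum_scale: fixes t :: "'n::finite \<Rightarrow> 'a::real_vector" shows "(\<Sum>i\<in>UNIV. (axis j (1::real) $ i) *\<^sub>R t i) = t j"
proof -
  have "(\<Sum>i\<in>UNIV. (axis j (1::real) $ i) *\<^sub>R t i) = (\<Sum>i\<in>UNIV. if i = j then t i else 0)"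
    by (rule sum.cong) (auto simp: axis_def)
  then show ?thesis by simp
qed

lemma Dv_Mo: "good g \<Longrightarrow> Dv v (Mo g) = (\<lambda>x u. (\<Sum>i\<in>UNIV. (snd v $ i) *\<^sub>R (cl_e i \<odot> g x u)) + Mo (Dv v g) x u)"
  unfolding Mo_e'
  by (simp add: Dv_sum Dv_mu Dv_cl sum.distrib)

lemma Dv_Mo_X[simp]: "good g \<Longrightarrow> Dv (Xv j) (Mo g) = Mo (Dv (Xv j) g)"
  by (simp add: Dv_Mo)
lemma Dv_Mo_U[simp]: "good g \<Longrightarrow> Dv (Uv j) (Mo g) = (\<lambda>x u. cl_e j \<odot> g x u + Mo (Dv (Uv j) g) x u)"
  by (simp add: Dv_Mo axis_sum_scale)

lemma Dv_uDx: "good g \<Longrightarrow> Dv v (uDx g) = (\<lambda>x u. (\<Sum>i\<in>UNIV. (snd v $ i) *\<^sub>R Dv (Xv i) g x u) + uDx (Dv v g) x u)"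
  by (simp add: uDx_e Dv_sum Dv_mu sum.distrib Dv_comm)
lemma Dv_uDx_X[simp]: "good g \<Longrightarrow> Dv (Xv j) (uDx g) = uDx (Dv (Xv j) g)"
  by (simp add: Dv_uDx)
lemma Dv_uDx_U[simp]: "good g \<Longrightarrow> Dv (Uv j) (uDx g) = (\<lambda>x u. Dv (Xv j) g x u + uDx (Dv (Uv j) g) x u)"
  by (simp add: Dv_uDx axis_sum_scale)

lemma Dv_Eo: "good g \<Longrightarrow> Dv v (Eo g) = (\<lambda>x u. (\<Sum>i\<in>UNIV. (snd v $ i) *\<^sub>R Dv (Uv i) g x u) + Eo (Dv v g) x u)"
  by (simp add: Eo_e Dv_sum Dv_mu sum.distrib Dv_comm)
lemma Dv_Eo_X[simp]: "good g \<Longrightarrow> Dv (Xv j) (Eo g) = Eo (Dv (Xv j) g)"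
  by (simp add: Dv_Eo)
lemma Dv_Eo_U[simp]: "good g \<Longrightarrow> Dv (Uv j) (Eo g) = (\<lambda>x u. Dv (Uv j) g x u + Eo (Dv (Uv j) g) x u)"
  by (simp add: Dv_Eo axis_sum_scale)

lemma Dv_Dx[simp]: "good g \<Longrightarrow> Dv v (Dx g) = Dx (Dv v g)"
  by (simp add: Dx_e Dv_sum Dv_cl Dv_comm)
lemma Dv_Du[simp]: "good g \<Longrightarrow> Dv v (Du g) = Du (Dv v g)"
  by (simp add: Du_e Dv_sum Dv_cl Dv_comm)
lemma Dv_DuDx[simp]: "good g \<Longrightarrow> Dv v (DuDx g) = DuDx (Dv v g)"
  by (simp add: DuDx_e Dv_sum Dv_comm)
lemma Dv_Lo[simp]: "good g \<Longrightarrow> Dv v (Lo g) = Lo (Dv v g)"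
  by (simp add: Lo_e Dv_sum Dv_comm)

lemma sum_delta_scale:
  fixes t :: "'n::finite \<Rightarrow> 'a::real_vector"
  shows "(\<Sum>j\<in>UNIV. (if i = j then c else 0) *\<^sub>R t j) = c *\<^sub>R t i"
proof -
  have "(\<Sum>j\<in>UNIV. (if i = j then c else 0) *\<^sub>R t j) = (\<Sum>j\<in>UNIV. if j = i then c *\<^sub>R t j else 0)"
    by (rule sum.cong) auto
  then show ?thesis by simp
qed

lemma anti_2:
  fixes k :: "'n::{finite,linorder} \<Rightarrow> 'n \<Rightarrow> 'n cl"
  shows "(\<Sum>i\<in>UNIV. cl_e i \<odot> (\<Sum>j\<in>UNIV. cl_e j \<odot> k i j)) + (\<Sum>j\<in>UNIV. cl_e j \<odot> (\<Sum>i\<in>UNIV. cl_e i \<odot> k i j))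
     = (-2) *\<^sub>R (\<Sum>i\<in>UNIV. k i i)"
proof -
  have "(\<Sum>j\<in>UNIV. cl_e j \<odot> (\<Sum>i\<in>UNIV. cl_e i \<odot> k i j)) = (\<Sum>i\<in>UNIV. \<Sum>j\<in>UNIV. cl_e j \<odot> (cl_e i \<odot> k i j))"
    by (simp add: cl_mult_sum_right) (rule sum.swap)
  moreover have "(\<Sum>i\<in>UNIV. cl_e i \<odot> (\<Sum>j\<in>UNIV. cl_e j \<odot> k i j)) = (\<Sum>i\<in>UNIV. \<Sum>j\<in>UNIV. cl_e i \<odot> (cl_e j \<odot> k i j))"
    by (simp add: cl_mult_sum_right)
  ultimately have "(\<Sum>i\<in>UNIV. cl_e i \<odot> (\<Sum>j\<in>UNIV. cl_e j \<odot> k i j)) + (\<Sum>j\<in>UNIV. cl_e j \<odot> (\<Sum>i\<in>UNIV. cl_e i \<odot> k i j))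
     = (\<Sum>i\<in>UNIV. \<Sum>j\<in>UNIV. cl_e i \<odot> (cl_e j \<odot> k i j) + cl_e j \<odot> (cl_e i \<odot> k i j))"
    by (simp add: sum.distrib)
  also have "\<dots> = (\<Sum>i\<in>UNIV. \<Sum>j\<in>UNIV. (if i = j then -2 else 0) *\<^sub>R k i j)"
    by (simp add: e_e_anti)
  also have "\<dots> = (\<Sum>i\<in>UNIV. (-2) *\<^sub>R k i i)"
    by (simp add: sum_delta_scale)
  finally show ?thesis by (simp add: scaleR_sum_right)
qed

lemma sym_2:
  fixes k :: "'n::{finite,linorder} \<Rightarrow> 'n \<Rightarrow> 'n cl"
  assumes "\<And>i j. k i j = k j i"
  shows "(\<Sum>i\<in>UNIV. cl_e i \<odot> (\<Sum>j\<in>UNIV. cl_e j \<odot> k i j)) = - (\<Sum>i\<in>UNIV. k i i)"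
proof -
  have "(\<Sum>j\<in>UNIV. cl_e j \<odot> (\<Sum>i\<in>UNIV. cl_e i \<odot> k i j)) = (\<Sum>i\<in>UNIV. cl_e i \<odot> (\<Sum>j\<in>UNIV. cl_e j \<odot> k i j))"
  proof -
    have "\<And>j. (\<Sum>i\<in>UNIV. cl_e i \<odot> k i j) = (\<Sum>i\<in>UNIV. cl_e i \<odot> k j i)"
      by (rule sum.cong[OF refl]) (rule arg_cong[OF assms])
    then show ?thesis by simp
  qed
  then have "(2::real) *\<^sub>R (\<Sum>i\<in>UNIV. cl_e i \<odot> (\<Sum>j\<in>UNIV. cl_e j \<odot> k i j)) = 2 *\<^sub>R (- (\<Sum>i\<in>UNIV. k i i))"
    using anti_2[of k] by (simp add: scaleR_2)
  then show ?thesis by (simp only: scaleR_cancel_left) simp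
qed

lemma anti_u:
  fixes k :: "'n::{finite,linorder} \<Rightarrow> 'n cl"
  shows "(\<Sum>i\<in>UNIV. cl_e i \<odot> (\<Sum>j\<in>UNIV. (u $ j) *\<^sub>R (cl_e j \<odot> k i))) + (\<Sum>j\<in>UNIV. (u $ j) *\<^sub>R (cl_e j \<odot> (\<Sum>i\<in>UNIV. cl_e i \<odot> k i)))
     = (-2) *\<^sub>R (\<Sum>i\<in>UNIV. (u $ i) *\<^sub>R k i)"
proof -
  have a: "(\<Sum>i\<in>UNIV. cl_e i \<odot> (\<Sum>j\<in>UNIV. (u $ j) *\<^sub>R (cl_e j \<odot> k i)))
     = (\<Sum>i\<in>UNIV. cl_e i \<odot> (\<Sum>j\<in>UNIV. cl_e j \<odot> ((u $ j) *\<^sub>R k i)))"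
    by (simp add: cl_mult_scale_right)
  have b: "(\<Sum>j\<in>UNIV. (u $ j) *\<^sub>R (cl_e j \<odot> (\<Sum>i\<in>UNIV. cl_e i \<odot> k i)))
     = (\<Sum>j\<in>UNIV. cl_e j \<odot> (\<Sum>i\<in>UNIV. cl_e i \<odot> ((u $ j) *\<^sub>R k i)))"
    by (simp add: cl_mult_scale_right flip: scaleR_sum_right)
  show ?thesis unfolding a b by (rule anti_2)
qed

lemma uDx_add[simp]: "good g \<Longrightarrow> good h \<Longrightarrow> uDx (\<lambda>x u. g x u + h x u) = (\<lambda>x u. uDx g x u + uDx h x u)"
  by (simp add: uDx_e Dv_add scaleR_add_right sum.distrib)
lemma uDx_blin: "bounded_linear L \<Longrightarrow> good g \<Longrightarrow> uDx (\<lambda>x u. L (g x u)) = (\<lambda>x u. L (uDx g x u))"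
  by (simp add: uDx_e Dv_blin linear_sum[OF bounded_linear.linear] linear_scale[OF bounded_linear.linear] good_blin)
lemma uDx_scale[simp]: "good g \<Longrightarrow> uDx (\<lambda>x u. c *\<^sub>R g x u) = (\<lambda>x u. c *\<^sub>R uDx g x u)"
  by (rule uDx_blin[OF bounded_linear_scaleR_right])
lemma uDx_minus[simp]: "good g \<Longrightarrow> uDx (\<lambda>x u. - g x u) = (\<lambda>x u. - uDx g x u)"
  by (rule uDx_blin[OF bounded_linear_minus[OF bounded_linear_ident]])
lemma uDx_cl[simp]: "good g \<Longrightarrow> uDx (\<lambda>x u. a \<odot> g x u) = (\<lambda>x u. a \<odot> uDx g x u)"
  by (rule uDx_blin[OF cl_mult_blin])
lemma uDx_diff[simp]: "good g \<Longrightarrow> good h \<Longrightarrow> uDx (\<lambda>x u. g x u - h x u) = (\<lambda>x u. uDx g x u - uDx h x u)"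
  using uDx_add[of g "\<lambda>x u. - h x u"] uDx_minus[of h] by simp
lemma uDx_zero[simp]: "uDx (\<lambda>x u. 0) = (\<lambda>x u. 0)"
  using uDx_scale[OF good_zero, of 0] by simp
lemma uDx_sum: "(\<And>i. good (g i)) \<Longrightarrow> uDx (\<lambda>x u. \<Sum>i\<in>S. g i x u) = (\<lambda>x u. \<Sum>i\<in>S. uDx (g i) x u)"
proof (induction S rule: infinite_finite_induct)
  case (insert a F) then show ?case using uDx_add[of "g a" "\<lambda>x u. \<Sum>i\<in>F. g i x u"] by simp
qed simp_all

lemma DuDx_add[simp]: "good g \<Longrightarrow> good h \<Longrightarrow> DuDx (\<lambda>x u. g x u + h x u) = (\<lambda>x u. DuDx g x u + DuDx h x u)"
  by (simp add: DuDx_e Dv_add scaleR_add_right sum.distrib)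
lemma DuDx_blin: "bounded_linear L \<Longrightarrow> good g \<Longrightarrow> DuDx (\<lambda>x u. L (g x u)) = (\<lambda>x u. L (DuDx g x u))"
  by (simp add: DuDx_e Dv_blin linear_sum[OF bounded_linear.linear] linear_scale[OF bounded_linear.linear] good_blin)
lemma DuDx_scale[simp]: "good g \<Longrightarrow> DuDx (\<lambda>x u. c *\<^sub>R g x u) = (\<lambda>x u. c *\<^sub>R DuDx g x u)"
  by (rule DuDx_blin[OF bounded_linear_scaleR_right])
lemma DuDx_minus[simp]: "good g \<Longrightarrow> DuDx (\<lambda>x u. - g x u) = (\<lambda>x u. - DuDx g x u)"
  by (rule DuDx_blin[OF bounded_linear_minus[OF bounded_linear_ident]])
lemma DuDx_cl[simp]: "good g \<Longrightarrow> DuDx (\<lambda>x u. a \<odot> g x u) = (\<lambda>x u. a \<odot> DuDx g x u)"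
  by (rule DuDx_blin[OF cl_mult_blin])
lemma DuDx_diff[simp]: "good g \<Longrightarrow> good h \<Longrightarrow> DuDx (\<lambda>x u. g x u - h x u) = (\<lambda>x u. DuDx g x u - DuDx h x u)"
  using DuDx_add[of g "\<lambda>x u. - h x u"] DuDx_minus[of h] by simp
lemma DuDx_zero[simp]: "DuDx (\<lambda>x u. 0) = (\<lambda>x u. 0)"
  using DuDx_scale[OF good_zero, of 0] by simp
lemma DuDx_sum: "(\<And>i. good (g i)) \<Longrightarrow> DuDx (\<lambda>x u. \<Sum>i\<in>S. g i x u) = (\<lambda>x u. \<Sum>i\<in>S. DuDx (g i) x u)"
proof (induction S rule: infinite_finite_induct)
  case (insert a F) then show ?case using DuDx_add[of "g a" "\<lambda>x u. \<Sum>i\<in>F. g i x u"] by simp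
qed simp_all

lemma Eo_add[simp]: "good g \<Longrightarrow> good h \<Longrightarrow> Eo (\<lambda>x u. g x u + h x u) = (\<lambda>x u. Eo g x u + Eo h x u)"
  by (simp add: Eo_e Dv_add scaleR_add_right sum.distrib)
lemma Eo_blin: "bounded_linear L \<Longrightarrow> good g \<Longrightarrow> Eo (\<lambda>x u. L (g x u)) = (\<lambda>x u. L (Eo g x u))"
  by (simp add: Eo_e Dv_blin linear_sum[OF bounded_linear.linear] linear_scale[OF bounded_linear.linear] good_blin)
lemma Eo_scale[simp]: "good g \<Longrightarrow> Eo (\<lambda>x u. c *\<^sub>R g x u) = (\<lambda>x u. c *\<^sub>R Eo g x u)"
  by (rule Eo_blin[OF bounded_linear_scaleR_right])
lemma Eo_minus[simp]: "good g \<Longrightarrow> Eo (\<lambda>x u. - g x u) = (\<lambda>x u. - Eo g x u)"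
  by (rule Eo_blin[OF bounded_linear_minus[OF bounded_linear_ident]])
lemma Eo_cl[simp]: "good g \<Longrightarrow> Eo (\<lambda>x u. a \<odot> g x u) = (\<lambda>x u. a \<odot> Eo g x u)"
  by (rule Eo_blin[OF cl_mult_blin])
lemma Eo_diff[simp]: "good g \<Longrightarrow> good h \<Longrightarrow> Eo (\<lambda>x u. g x u - h x u) = (\<lambda>x u. Eo g x u - Eo h x u)"
  using Eo_add[of g "\<lambda>x u. - h x u"] Eo_minus[of h] by simp
lemma Eo_zero[simp]: "Eo (\<lambda>x u. 0) = (\<lambda>x u. 0)"
  using Eo_scale[OF good_zero, of 0] by simp
lemma Eo_sum: "(\<And>i. good (g i)) \<Longrightarrow> Eo (\<lambda>x u. \<Sum>i\<in>S. g i x u) = (\<lambda>x u. \<Sum>i\<in>S. Eo (g i) x u)"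
proof (induction S rule: infinite_finite_induct)
  case (insert a F) then show ?case using Eo_add[of "g a" "\<lambda>x u. \<Sum>i\<in>F. g i x u"] by simp
qed simp_all

lemma Lo_add[simp]: "good g \<Longrightarrow> good h \<Longrightarrow> Lo (\<lambda>x u. g x u + h x u) = (\<lambda>x u. Lo g x u + Lo h x u)"
  by (simp add: Lo_e Dv_add scaleR_add_right sum.distrib)
lemma Lo_blin: "bounded_linear L \<Longrightarrow> good g \<Longrightarrow> Lo (\<lambda>x u. L (g x u)) = (\<lambda>x u. L (Lo g x u))"
  by (simp add: Lo_e Dv_blin linear_sum[OF bounded_linear.linear] linear_scale[OF bounded_linear.linear] good_blin)
lemma Lo_scale[simp]: "good g \<Longrightarrow> Lo (\<lambda>x u. c *\<^sub>R g x u) = (\<lambda>x u. c *\<^sub>R Lo g x u)"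
  by (rule Lo_blin[OF bounded_linear_scaleR_right])
lemma Lo_minus[simp]: "good g \<Longrightarrow> Lo (\<lambda>x u. - g x u) = (\<lambda>x u. - Lo g x u)"
  by (rule Lo_blin[OF bounded_linear_minus[OF bounded_linear_ident]])
lemma Lo_cl[simp]: "good g \<Longrightarrow> Lo (\<lambda>x u. a \<odot> g x u) = (\<lambda>x u. a \<odot> Lo g x u)"
  by (rule Lo_blin[OF cl_mult_blin])
lemma Lo_diff[simp]: "good g \<Longrightarrow> good h \<Longrightarrow> Lo (\<lambda>x u. g x u - h x u) = (\<lambda>x u. Lo g x u - Lo h x u)"
  using Lo_add[of g "\<lambda>x u. - h x u"] Lo_minus[of h] by simp
lemma Lo_zero[simp]: "Lo (\<lambda>x u. 0) = (\<lambda>x u. 0)"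
  using Lo_scale[OF good_zero, of 0] by simp
lemma Lo_sum: "(\<And>i. good (g i)) \<Longrightarrow> Lo (\<lambda>x u. \<Sum>i\<in>S. g i x u) = (\<lambda>x u. \<Sum>i\<in>S. Lo (g i) x u)"
proof (induction S rule: infinite_finite_induct)
  case (insert a F) then show ?case using Lo_add[of "g a" "\<lambda>x u. \<Sum>i\<in>F. g i x u"] by simp
qed simp_all

lemma Dx_add[simp]: "good g \<Longrightarrow> good h \<Longrightarrow> Dx (\<lambda>x u. g x u + h x u) = (\<lambda>x u. Dx g x u + Dx h x u)"
  by (simp add: Dx_e Dv_add cl_mult_add_right sum.distrib)
lemma Dx_scale[simp]: "good g \<Longrightarrow> Dx (\<lambda>x u. c *\<^sub>R g x u) = (\<lambda>x u. c *\<^sub>R Dx g x u)"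
  by (simp add: Dx_e Dv_scale cl_mult_scale_right scaleR_sum_right)
lemma Dx_minus[simp]: "good g \<Longrightarrow> Dx (\<lambda>x u. - g x u) = (\<lambda>x u. - Dx g x u)"
  by (simp add: Dx_e Dv_minus cl_mult_minus_right sum_negf)
lemma Dx_diff[simp]: "good g \<Longrightarrow> good h \<Longrightarrow> Dx (\<lambda>x u. g x u - h x u) = (\<lambda>x u. Dx g x u - Dx h x u)"
  using Dx_add[of g "\<lambda>x u. - h x u"] Dx_minus[of h] by simp
lemma Dx_zero[simp]: "Dx (\<lambda>x u. 0) = (\<lambda>x u. 0)"
  using Dx_scale[OF good_zero, of 0] by simp
lemma Dx_sum: "(\<And>i. good (g i)) \<Longrightarrow> Dx (\<lambda>x u. \<Sum>i\<in>S. g i x u) = (\<lambda>x u. \<Sum>i\<in>S. Dx (g i) x u)"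
proof (induction S rule: infinite_finite_induct)
  case (insert a F) then show ?case using Dx_add[of "g a" "\<lambda>x u. \<Sum>i\<in>F. g i x u"] by simp
qed simp_all

lemma Du_add[simp]: "good g \<Longrightarrow> good h \<Longrightarrow> Du (\<lambda>x u. g x u + h x u) = (\<lambda>x u. Du g x u + Du h x u)"
  by (simp add: Du_e Dv_add cl_mult_add_right sum.distrib)
lemma Du_scale[simp]: "good g \<Longrightarrow> Du (\<lambda>x u. c *\<^sub>R g x u) = (\<lambda>x u. c *\<^sub>R Du g x u)"
  by (simp add: Du_e Dv_scale cl_mult_scale_right scaleR_sum_right)
lemma Du_minus[simp]: "good g \<Longrightarrow> Du (\<lambda>x u. - g x u) = (\<lambda>x u. - Du g x u)"
  by (simp add: Du_e Dv_minus cl_mult_minus_right sum_negf)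
lemma Du_diff[simp]: "good g \<Longrightarrow> good h \<Longrightarrow> Du (\<lambda>x u. g x u - h x u) = (\<lambda>x u. Du g x u - Du h x u)"
  using Du_add[of g "\<lambda>x u. - h x u"] Du_minus[of h] by simp
lemma Du_zero[simp]: "Du (\<lambda>x u. 0) = (\<lambda>x u. 0)"
  using Du_scale[OF good_zero, of 0] by simp
lemma Du_sum: "(\<And>i. good (g i)) \<Longrightarrow> Du (\<lambda>x u. \<Sum>i\<in>S. g i x u) = (\<lambda>x u. \<Sum>i\<in>S. Du (g i) x u)"
proof (induction S rule: infinite_finite_induct)
  case (insert a F) then show ?case using Du_add[of "g a" "\<lambda>x u. \<Sum>i\<in>F. g i x u"] by simp
qed simp_all

lemma Mo_add[simp]: "Mo (\<lambda>x u. g x u + h x u) = (\<lambda>x u. Mo g x u + Mo h x u)"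
  by (simp add: Mo_def cl_mult_add_right)
lemma Mo_scale[simp]: "Mo (\<lambda>x u. c *\<^sub>R g x u) = (\<lambda>x u. c *\<^sub>R Mo g x u)"
  by (simp add: Mo_def cl_mult_scale_right)
lemma Mo_minus[simp]: "Mo (\<lambda>x u. - g x u) = (\<lambda>x u. - Mo g x u)"
  by (simp add: Mo_def cl_mult_minus_right)
lemma Mo_diff[simp]: "Mo (\<lambda>x u. g x u - h x u) = (\<lambda>x u. Mo g x u - Mo h x u)"
  by (simp add: Mo_def cl_mult_diff_right)
lemma Mo_zero[simp]: "Mo (\<lambda>x u. 0) = (\<lambda>x u. 0)"
  by (simp add: Mo_def cl_mult_zero_right)
lemma Mo_sum: "Mo (\<lambda>x u. \<Sum>i\<in>S. g i x u) = (\<lambda>x u. \<Sum>i\<in>S. Mo (g i) x u)"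
  by (simp add: Mo_def cl_mult_sum_right)

lemma sum_e_e: "(\<Sum>i\<in>UNIV. cl_e i \<odot> (cl_e i \<odot> (y::'n::{finite,linorder} cl))) = - (real CARD('n) *\<^sub>R y)"
  by (simp add: e_e_same scaleR_conv_of_real)

lemma R_dM: fixes g :: "('n::{finite,linorder}) clfun" shows "good g \<Longrightarrow> Du (Mo g) = (\<lambda>x u. - Mo (Du g) x u - 2 *\<^sub>R Eo g x u - real CARD('n) *\<^sub>R g x u)"
proof (intro ext)
  fix x u :: "(real,'n) vec" assume g: "good g"
  have 1: "Du (Mo g) x u = (\<Sum>i\<in>UNIV. cl_e i \<odot> (cl_e i \<odot> g x u)) + (\<Sum>i\<in>UNIV. cl_e i \<odot> Mo (Dv (Uv i) g) x u)"
    using g by (simp add: Du_e cl_mult_add_right sum.distrib)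
  have 3: "(\<Sum>i\<in>UNIV. cl_e i \<odot> Mo (Dv (Uv i) g) x u) + Mo (Du g) x u = (-2) *\<^sub>R Eo g x u"
    using g anti_u[of u "\<lambda>i. Dv (Uv i) g x u"] by (simp add: Mo_e Du_e Eo_e)
  show "Du (Mo g) x u = - Mo (Du g) x u - 2 *\<^sub>R Eo g x u - real CARD('n) *\<^sub>R g x u"
  proof -
    have "(\<Sum>i\<in>UNIV. cl_e i \<odot> Mo (Dv (Uv i) g) x u) = (-2) *\<^sub>R Eo g x u - Mo (Du g) x u"
      using 3 by (simp add: eq_diff_eq)
    then show ?thesis using 1 sum_e_e[of "g x u"] by simp
  qed
qed


lemma R_DM: fixes g :: "('n::{finite,linorder}) clfun" shows "good g \<Longrightarrow> Dx (Mo g) = (\<lambda>x u. - Mo (Dx g) x u - 2 *\<^sub>R uDx g x u)"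
proof (intro ext)
  fix x u :: "(real,'n) vec" assume g: "good g"
  have 3: "Dx (Mo g) x u + Mo (Dx g) x u = (-2) *\<^sub>R uDx g x u"
    using g anti_u[of u "\<lambda>i. Dv (Xv i) g x u"] by (simp add: Mo_e Dx_e uDx_e)
  then have "Dx (Mo g) x u = (-2) *\<^sub>R uDx g x u - Mo (Dx g) x u"
    by (simp add: eq_diff_eq)
  then show "Dx (Mo g) x u = - Mo (Dx g) x u - 2 *\<^sub>R uDx g x u" by simp
qed

lemma R_dA: fixes g :: "('n::{finite,linorder}) clfun" shows "good g \<Longrightarrow> Du (uDx g) = (\<lambda>x u. uDx (Du g) x u + Dx g x u)"
proof (intro ext)
  fix x u :: "(real,'n) vec" assume g: "good g"
  have 1: "Du (uDx g) x u = Dx g x u + (\<Sum>i\<in>UNIV. cl_e i \<odot> uDx (Dv (Uv i) g) x u)"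
    using g by (simp add: Du_e Dx_e cl_mult_add_right sum.distrib)
  have 2: "uDx (Du g) x u = (\<Sum>i\<in>UNIV. cl_e i \<odot> uDx (Dv (Uv i) g) x u)"
    using g by (simp add: Du_e[of g] uDx_sum)
  show "Du (uDx g) x u = uDx (Du g) x u + Dx g x u" using 1 2 by simp
qed

lemma R_dD: fixes g :: "('n::{finite,linorder}) clfun" shows "good g \<Longrightarrow> Du (Dx g) = (\<lambda>x u. - Dx (Du g) x u - 2 *\<^sub>R DuDx g x u)"
proof (intro ext)
  fix x u :: "(real,'n) vec" assume g: "good g"
  have 3: "Du (Dx g) x u + Dx (Du g) x u = (-2) *\<^sub>R DuDx g x u"
    using g anti_2[of "\<lambda>i j. Dv (Uv i) (Dv (Xv j) g) x u"] by (simp add: Du_e Dx_e DuDx_e Dv_comm Dv_sum Dv_cl)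
  then have "Du (Dx g) x u = (-2) *\<^sub>R DuDx g x u - Dx (Du g) x u"
    by (simp add: eq_diff_eq)
  then show "Du (Dx g) x u = - Dx (Du g) x u - 2 *\<^sub>R DuDx g x u" by simp
qed

lemma R_dB: fixes g :: "('n::{finite,linorder}) clfun" shows "good g \<Longrightarrow> Du (DuDx g) = DuDx (Du g)"
proof (intro ext)
  fix x u :: "(real,'n) vec" assume g: "good g"
  show "Du (DuDx g) x u = DuDx (Du g) x u"
    using g by (simp add: Du_e[of "DuDx g"] Du_e[of g] DuDx_sum)
qed

lemma R_dd: fixes g :: "('n::{finite,linorder}) clfun" shows "good g \<Longrightarrow> Du (Du g) = (\<lambda>x u. - Lo g x u)"
proof (intro ext)
  fix x u :: "(real,'n) vec" assume g: "good g"
  have s: "\<And>i j. Dv (Uv j) (Dv (Uv i) g) x u = Dv (Uv i) (Dv (Uv j) g) x u" using g by (simp add: Dv_comm)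
  show "Du (Du g) x u = - Lo g x u"
    using g sym_2[of "\<lambda>i j. Dv (Uv i) (Dv (Uv j) g) x u", OF s[symmetric]] by (simp add: Du_e Lo_e Dv_sum Dv_cl)
qed

lemma R_DD: fixes g :: "('n::{finite,linorder}) clfun" shows "good g \<Longrightarrow> Dx (Dx g) = (\<lambda>x u. - Lapx g x u)"
proof (intro ext)
  fix x u :: "(real,'n) vec" assume g: "good g"
  have s: "\<And>i j. Dv (Xv j) (Dv (Xv i) g) x u = Dv (Xv i) (Dv (Xv j) g) x u" using g by (simp add: Dv_comm)
  show "Dx (Dx g) x u = - Lapx g x u"
    using g sym_2[of "\<lambda>i j. Dv (Xv i) (Dv (Xv j) g) x u", OF s[symmetric]] by (simp add: Dx_e Lapx_e Dv_sum Dv_cl)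
qed

lemma R_BM: fixes g :: "('n::{finite,linorder}) clfun" shows "good g \<Longrightarrow> DuDx (Mo g) = (\<lambda>x u. Mo (DuDx g) x u + Dx g x u)"
proof (intro ext)
  fix x u :: "(real,'n) vec" assume g: "good g"
  show "DuDx (Mo g) x u = Mo (DuDx g) x u + Dx g x u"
    using g by (simp add: DuDx_e Dx_e Mo_sum sum.distrib)
qed

lemma R_BA: fixes g :: "('n::{finite,linorder}) clfun" shows "good g \<Longrightarrow> DuDx (uDx g) = (\<lambda>x u. uDx (DuDx g) x u - Dx (Dx g) x u)"
proof (intro ext)
  fix x u :: "(real,'n) vec" assume g: "good g"
  show "DuDx (uDx g) x u = uDx (DuDx g) x u - Dx (Dx g) x u"
    using g by (simp add: R_DD DuDx_e Lapx_e uDx_sum sum.distrib)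
qed

lemma R_BD: fixes g :: "('n::{finite,linorder}) clfun" shows "good g \<Longrightarrow> DuDx (Dx g) = Dx (DuDx g)"
proof (intro ext)
  fix x u :: "(real,'n) vec" assume g: "good g"
  show "DuDx (Dx g) x u = Dx (DuDx g) x u"
    using g by (simp add: DuDx_e[of "Dx g"] DuDx_e[of g] Dx_sum)
qed

lemma R_DA: fixes g :: "('n::{finite,linorder}) clfun" shows "good g \<Longrightarrow> Dx (uDx g) = uDx (Dx g)"
proof (intro ext)
  fix x u :: "(real,'n) vec" assume g: "good g"
  show "Dx (uDx g) x u = uDx (Dx g) x u"
    using g by (simp add: Dx_e[of "uDx g"] Dx_e[of g] uDx_sum)
qed

lemma R_AM: fixes g :: "('n::{finite,linorder}) clfun" shows "good g \<Longrightarrow> uDx (Mo g) = Mo (uDx g)"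
proof (intro ext)
  fix x u :: "(real,'n) vec" assume g: "good g"
  have 1: "uDx (Mo g) x u = (\<Sum>i\<in>UNIV. (u $ i) *\<^sub>R Mo (Dv (Xv i) g) x u)"
    using g by (simp add: uDx_e)
  show "uDx (Mo g) x u = Mo (uDx g) x u"
    unfolding 1 using g by (simp add: uDx_e Mo_def cl_mult_sum_right cl_mult_scale_right)
qed

lemma R_EM: fixes g :: "('n::{finite,linorder}) clfun" shows "good g \<Longrightarrow> Eo (Mo g) = (\<lambda>x u. Mo (Eo g) x u + Mo g x u)"
proof (intro ext)
  fix x u :: "(real,'n) vec" assume g: "good g"
  have 1: "Eo (Mo g) x u = (\<Sum>i\<in>UNIV. (u $ i) *\<^sub>R (cl_e i \<odot> g x u)) + (\<Sum>i\<in>UNIV. (u $ i) *\<^sub>R Mo (Dv (Uv i) g) x u)"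
    using g by (simp add: Eo_e scaleR_add_right sum.distrib)
  have 2: "(\<Sum>i\<in>UNIV. (u $ i) *\<^sub>R (cl_e i \<odot> g x u)) = Mo g x u" by (simp add: Mo_e)
  have 3: "(\<Sum>i\<in>UNIV. (u $ i) *\<^sub>R Mo (Dv (Uv i) g) x u) = Mo (Eo g) x u"
    using g by (simp add: Eo_e Mo_def cl_mult_sum_right cl_mult_scale_right)
  show "Eo (Mo g) x u = Mo (Eo g) x u + Mo g x u"
    unfolding 1 2 3 by simp
qed

lemma Dv_X_mu[simp]: fixes g :: "('n::{finite,linorder}) clfun" shows "good g \<Longrightarrow> Dv (Xv i) (\<lambda>x u. (u $ j) *\<^sub>R g x u) = (\<lambda>x u. (u $ j) *\<^sub>R Dv (Xv i) g x u)"
  by (simp add: Dv_mu)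

lemma R_EA: fixes g :: "('n::{finite,linorder}) clfun" shows "good g \<Longrightarrow> Eo (uDx g) = (\<lambda>x u. uDx (Eo g) x u + uDx g x u)"
proof (intro ext)
  fix x u :: "(real,'n) vec" assume g: "good g"
  have 1: "Eo (uDx g) x u = (\<Sum>j\<in>UNIV. (u $ j) *\<^sub>R Dv (Xv j) g x u) + (\<Sum>j\<in>UNIV. (u $ j) *\<^sub>R uDx (Dv (Uv j) g) x u)"
    using g by (simp add: Eo_e[of "uDx g"] scaleR_add_right sum.distrib)
  have h1: "(\<Sum>j\<in>UNIV. (u $ j) *\<^sub>R Dv (Xv j) g x u) = uDx g x u" using g by (simp add: uDx_e)
  have 2: "uDx (Eo g) x u = (\<Sum>j\<in>UNIV. (u $ j) *\<^sub>R uDx (Dv (Uv j) g) x u)"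
  proof -
    have a: "uDx (Eo g) x u = (\<Sum>i\<in>UNIV. \<Sum>j\<in>UNIV. (u $ i * u $ j) *\<^sub>R Dv (Xv i) (Dv (Uv j) g) x u)"
      using g by (simp add: Eo_e[of g] uDx_e Dv_sum scaleR_sum_right)
    have b: "(\<Sum>j\<in>UNIV. (u $ j) *\<^sub>R uDx (Dv (Uv j) g) x u) = (\<Sum>j\<in>UNIV. \<Sum>i\<in>UNIV. (u $ i * u $ j) *\<^sub>R Dv (Xv i) (Dv (Uv j) g) x u)"
      using g by (simp add: uDx_e scaleR_sum_right mult.commute)
    show ?thesis unfolding a b by (rule sum.swap)
  qed
  show "Eo (uDx g) x u = uDx (Eo g) x u + uDx g x u" using 1 h1 2 by simp
qed


lemma R_ED: fixes g :: "('n::{finite,linorder}) clfun" shows "good g \<Longrightarrow> Eo (Dx g) = Dx (Eo g)"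
proof (intro ext)
  fix x u :: "(real,'n) vec" assume g: "good g"
  have a: "Dx (Eo g) x u = (\<Sum>i\<in>UNIV. \<Sum>j\<in>UNIV. (u $ j) *\<^sub>R (cl_e i \<odot> Dv (Xv i) (Dv (Uv j) g) x u))"
    using g by (simp add: Eo_e[of g] Dx_e Dv_sum cl_mult_sum_right cl_mult_scale_right)
  have b: "Eo (Dx g) x u = (\<Sum>j\<in>UNIV. \<Sum>i\<in>UNIV. (u $ j) *\<^sub>R (cl_e i \<odot> Dv (Xv i) (Dv (Uv j) g) x u))"
    using g by (simp add: Eo_e[of "Dx g"] Dx_e[of "Dv _ g"] scaleR_sum_right Dv_comm)
  show "Eo (Dx g) x u = Dx (Eo g) x u" unfolding a b by (rule sum.swap)
qed

lemma R_EB: fixes g :: "('n::{finite,linorder}) clfun" shows "good g \<Longrightarrow> Eo (DuDx g) = (\<lambda>x u. DuDx (Eo g) x u - DuDx g x u)"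
proof (intro ext)
  fix x u :: "(real,'n) vec" assume g: "good g"
  have "DuDx (Eo g) x u = DuDx g x u + Eo (DuDx g) x u"
    using g by (simp add: DuDx_e[of "Eo g"] DuDx_e[of g] Eo_sum sum.distrib)
  then show "Eo (DuDx g) x u = DuDx (Eo g) x u - DuDx g x u" by simp
qed

lemma R_Ed: fixes g :: "('n::{finite,linorder}) clfun" shows "good g \<Longrightarrow> Eo (Du g) = (\<lambda>x u. Du (Eo g) x u - Du g x u)"
proof (intro ext)
  fix x u :: "(real,'n) vec" assume g: "good g"
  have "Du (Eo g) x u = Du g x u + Eo (Du g) x u"
    using g by (simp add: Du_e[of "Eo g"] Du_e[of g] Eo_sum cl_mult_add_right sum.distrib)
  then show "Eo (Du g) x u = Du (Eo g) x u - Du g x u" by simp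
qed

lemma R_LD: fixes g :: "('n::{finite,linorder}) clfun" shows "good g \<Longrightarrow> Lo (Dx g) = Dx (Lo g)"
proof (intro ext)
  fix x u :: "(real,'n) vec" assume g: "good g"
  show "Lo (Dx g) x u = Dx (Lo g) x u"
    using g by (simp add: Lo_e[of "Dx g"] Lo_e[of g] Dx_sum)
qed

lemma R_LB: fixes g :: "('n::{finite,linorder}) clfun" shows "good g \<Longrightarrow> Lo (DuDx g) = DuDx (Lo g)"
proof (intro ext)
  fix x u :: "(real,'n) vec" assume g: "good g"
  show "Lo (DuDx g) x u = DuDx (Lo g) x u"
    using g by (simp add: Lo_e[of "DuDx g"] Lo_e[of g] DuDx_sum)
qed

lemma R_Ld: fixes g :: "('n::{finite,linorder}) clfun" shows "good g \<Longrightarrow> Lo (Du g) = Du (Lo g)"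
proof (intro ext)
  fix x u :: "(real,'n) vec" assume g: "good g"
  show "Lo (Du g) x u = Du (Lo g) x u"
    using g by (simp add: Lo_e[of "Du g"] Lo_e[of g] Du_sum)
qed

lemma R_LM: fixes g :: "('n::{finite,linorder}) clfun" shows "good g \<Longrightarrow> Lo (Mo g) = (\<lambda>x u. Mo (Lo g) x u + 2 *\<^sub>R Du g x u)"
proof (intro ext)
  fix x u :: "(real,'n) vec" assume g: "good g"
  have "Lo (Mo g) x u = (\<Sum>i\<in>UNIV. cl_e i \<odot> Dv (Uv i) g x u) + (\<Sum>i\<in>UNIV. cl_e i \<odot> Dv (Uv i) g x u) + (\<Sum>i\<in>UNIV. Mo (Dv (Uv i) (Dv (Uv i) g)) x u)"
    using g by (simp add: Lo_e[of "Mo g"] Dv_add Dv_cl sum.distrib sum_distrib_left)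
  moreover have "(\<Sum>i\<in>UNIV. Mo (Dv (Uv i) (Dv (Uv i) g)) x u) = Mo (Lo g) x u"
    using g by (simp add: Lo_e Mo_sum)
  moreover have "(\<Sum>i\<in>UNIV. cl_e i \<odot> Dv (Uv i) g x u) = Du g x u"
    using g by (simp add: Du_e)
  ultimately show "Lo (Mo g) x u = Mo (Lo g) x u + 2 *\<^sub>R Du g x u" by (simp add: scaleR_2 sum_distrib_left)
qed

lemma R_LA: fixes g :: "('n::{finite,linorder}) clfun" shows "good g \<Longrightarrow> Lo (uDx g) = (\<lambda>x u. uDx (Lo g) x u + 2 *\<^sub>R DuDx g x u)"
proof (intro ext)
  fix x u :: "(real,'n) vec" assume g: "good g"
  have "Lo (uDx g) x u = (\<Sum>i\<in>UNIV. Dv (Uv i) (Dv (Xv i) g) x u) + (\<Sum>i\<in>UNIV. Dv (Uv i) (Dv (Xv i) g) x u) + (\<Sum>i\<in>UNIV. uDx (Dv (Uv i) (Dv (Uv i) g)) x u)"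
    using g by (simp add: Lo_e[of "uDx g"] Dv_add sum.distrib Dv_comm sum_distrib_left)
  moreover have "(\<Sum>i\<in>UNIV. uDx (Dv (Uv i) (Dv (Uv i) g)) x u) = uDx (Lo g) x u"
    using g by (simp add: Lo_e uDx_sum)
  moreover have "(\<Sum>i\<in>UNIV. Dv (Uv i) (Dv (Xv i) g) x u) = DuDx g x u"
    using g by (simp add: DuDx_e)
  ultimately show "Lo (uDx g) x u = uDx (Lo g) x u + 2 *\<^sub>R DuDx g x u" by (simp add: scaleR_2 sum_distrib_left)
qed

lemma R_MM: "Mo (Mo g) = (\<lambda>x u. - ((norm u)\<^sup>2 *\<^sub>R g x u))"
proof (intro ext)
  fix x u
  have "Mo (Mo g) x u = (\<Sum>i\<in>UNIV. \<Sum>j\<in>UNIV. (u $ i * u $ j) *\<^sub>R (cl_e j \<odot> (cl_e i \<odot> g x u)))"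
    by (simp add: Mo_e Mo_def cl_vec_mult cl_mult_sum_right cl_mult_scale_right scaleR_sum_right)
  also have "\<dots> = (\<Sum>j\<in>UNIV. \<Sum>i\<in>UNIV. (u $ i * u $ j) *\<^sub>R (cl_e j \<odot> (cl_e i \<odot> g x u)))"
    by (rule sum.swap)
  also have "\<dots> = (\<Sum>i\<in>UNIV. cl_e i \<odot> (\<Sum>j\<in>UNIV. cl_e j \<odot> ((u $ i * u $ j) *\<^sub>R g x u)))"
    by (simp add: cl_mult_sum_right cl_mult_scale_right mult.commute)
  also have "\<dots> = - (\<Sum>i\<in>UNIV. (u $ i * u $ i) *\<^sub>R g x u)"
    by (rule sym_2) (simp add: mult.commute)
  also have "\<dots> = - ((norm u)\<^sup>2 *\<^sub>R g x u)"
    by (simp add: power2_norm_eq_inner inner_vec_def scaleR_sum_left)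
  finally show "Mo (Mo g) x u = - ((norm u)\<^sup>2 *\<^sub>R g x u)" .
qed

lemma hom_scale:
  fixes p :: "real^('n::{finite,linorder}) \<Rightarrow> 'n cl"
  assumes "hom_poly k p"
  shows "p (t *\<^sub>R u) = (t ^ k) *\<^sub>R p u"
proof -
  obtain c where c: "\<And>u. p u = (\<Sum>\<alpha>\<in>{\<alpha>::'n \<Rightarrow> nat. (\<Sum>i\<in>UNIV. \<alpha> i) = k}. (\<Prod>i\<in>UNIV. (u $ i) ^ (\<alpha> i)) *\<^sub>R c \<alpha>)"
    using assms unfolding hom_poly_def by blast
  have "(\<Prod>i\<in>UNIV. ((t *\<^sub>R u) $ i) ^ (\<alpha> i)) = t ^ k * (\<Prod>i\<in>UNIV. (u $ i) ^ (\<alpha> i))"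
    if "(\<Sum>i\<in>UNIV. \<alpha> i) = k" for \<alpha> :: "'n \<Rightarrow> nat"
  proof -
    have "(\<Prod>i\<in>UNIV. ((t *\<^sub>R u) $ i) ^ (\<alpha> i)) = (\<Prod>i\<in>UNIV. t ^ \<alpha> i) * (\<Prod>i\<in>UNIV. (u $ i) ^ (\<alpha> i))"
      by (simp add: power_mult_distrib prod.distrib)
    also have "(\<Prod>i\<in>UNIV. t ^ \<alpha> i) = t ^ (\<Sum>i\<in>UNIV. \<alpha> i)" by (simp add: power_sum)
    finally show ?thesis using that by simp
  qed
  then have H: "\<And>\<alpha>. \<alpha> \<in> {\<alpha>::'n \<Rightarrow> nat. (\<Sum>i\<in>UNIV. \<alpha> i) = k} \<Longrightarrow>
     (\<Prod>i\<in>UNIV. ((t *\<^sub>R u) $ i) ^ (\<alpha> i)) *\<^sub>R c \<alpha> = (t ^ k) *\<^sub>R ((\<Prod>i\<in>UNIV. (u $ i) ^ (\<alpha> i)) *\<^sub>R c \<alpha>)"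
    by simp
  show ?thesis unfolding c scaleR_sum_right
    by (rule sum.cong[OF refl H])
qed

lemma Euler:
  fixes f :: "('n::{finite,linorder}) clfun"
  assumes g: "good f" and h: "\<And>x. hom_poly k (f x)"
  shows "Eo f = (\<lambda>x u. real k *\<^sub>R f x u)"
proof (intro ext)
  fix x u :: "(real,'n) vec"
  define G where "G = Gof f"
  have sG: "smooth G" using g unfolding good_def G_def .
  have lin: "linear (frechet_derivative G (at (x,u)))" using fd_linear[OF sG] .
  have "Eo f x u = (\<Sum>i\<in>UNIV. (u $ i) *\<^sub>R frechet_derivative G (at (x,u)) (Uv i))"
    using g by (simp add: Eo_e Dv_def G_def)
  also have "\<dots> = frechet_derivative G (at (x,u)) (\<Sum>i\<in>UNIV. (u $ i) *\<^sub>R Uv i)"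
    by (simp only: linear_sum[OF lin] linear_scale[OF lin] o_def)
  also have "(\<Sum>i\<in>UNIV. (u $ i) *\<^sub>R Uv i) = (0, u)"
  proof -
    have "(\<Sum>i\<in>UNIV. (u $ i) *\<^sub>R Uv i) = (0, \<Sum>i\<in>UNIV. (u $ i) *\<^sub>R axis i 1)"
      by (simp add: prod_eq_iff fst_sum snd_sum)
    also have "(\<Sum>i\<in>UNIV. (u $ i) *\<^sub>R axis i (1::real)) = u"
    proof (subst vec_eq_iff, intro allI)
      fix j
      have "(\<Sum>i\<in>UNIV. (u $ i) *\<^sub>R axis i (1::real)) $ j = (\<Sum>i\<in>UNIV. (u $ i) * (axis i (1::real) $ j))"
        by (simp add: sum_component)
      also have "\<dots> = (\<Sum>i\<in>UNIV. if i = j then u $ i else 0)"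
        by (rule sum.cong) (auto simp: axis_def)
      finally show "(\<Sum>i\<in>UNIV. (u $ i) *\<^sub>R axis i (1::real)) $ j = u $ j" by simp
    qed
    finally show ?thesis .
  qed
  finally have E: "Eo f x u = frechet_derivative G (at (x,u)) (0, u)" .
  have l: "((\<lambda>t::real. (x, t *\<^sub>R u)) has_derivative (\<lambda>s. (0, s *\<^sub>R u))) (at 1)"
    by (auto intro!: derivative_eq_intros)
  have d1: "((\<lambda>t. G (x, t *\<^sub>R u)) has_derivative (\<lambda>s. frechet_derivative G (at (x,u)) (0, s *\<^sub>R u))) (at 1)"
    using has_derivative_compose[OF l smooth_hasd[OF sG, of "(x, 1 *\<^sub>R u)"]] by simp
  have eq: "(\<lambda>t. G (x, t *\<^sub>R u)) = (\<lambda>t. (t ^ k) *\<^sub>R f x u)"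
    using hom_scale[OF h] unfolding G_def Gof_def by simp
  have d2: "((\<lambda>t. G (x, t *\<^sub>R u)) has_derivative (\<lambda>s. (s * (real k * 1 ^ (k - 1))) *\<^sub>R f x u)) (at 1)"
    unfolding eq by (auto intro!: derivative_eq_intros)
  have FE: "(\<lambda>s. frechet_derivative G (at (x,u)) (0, s *\<^sub>R u)) = (\<lambda>s. (s * (real k * 1 ^ (k - 1))) *\<^sub>R f x u)"
    using has_derivative_unique[OF d1 d2] .
  have "frechet_derivative G (at (x,u)) (0, 1 *\<^sub>R u) = real k *\<^sub>R f x u"
    using fun_cong[OF FE, of 1] by simp
  then show "Eo f x u = real k *\<^sub>R f x u" using E by simp
qed

lemma Harm:
  fixes f :: "('n::{finite,linorder}) clfun"
  assumes h: "\<And>x. harmonic (f x)"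
  shows "Lo f = (\<lambda>x u. 0)"
proof (intro ext)
  fix x u
  have "Lo f x u = (\<Sum>i\<in>UNIV. pd i (pd i (f x)) u)"
    unfolding Lo_def du_def by simp
  then show "Lo f x u = 0" using h unfolding harmonic_def by simp
qed

lemma Pp_alt: "Pp k g = (\<lambda>x u. g x u + (1 / (real CARD('n) + 2 * real k - 2)) *\<^sub>R Mo (Du g) x u)"
  for g :: "('n::{finite,linorder}) clfun"
  by (simp add: Pp_def Mo_def)
lemma Pm_alt: "Pm k g = (\<lambda>x u. - ((1 / (real CARD('n) + 2 * real k - 2)) *\<^sub>R Mo (Du g) x u))"
  for g :: "('n::{finite,linorder}) clfun"
  by (simp add: Pm_def Mo_def)

lemma D2_alt:
  fixes f :: "('n::{finite,linorder}) clfun"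
  assumes "good f"
  shows "D2 k f = (\<lambda>x u. - Dx (Dx f) x u
     - (4 / (real CARD('n) + 2 * real k - 2)) *\<^sub>R uDx (DuDx f) x u
     - (4 / ((real CARD('n) + 2 * real k - 2) * (real CARD('n) + 2 * real k - 4))) *\<^sub>R Mo (Mo (DuDx (DuDx f))) x u)"
  using assms by (simp add: D2_def R_DD R_MM)

lemmas rels = R_dM R_dA R_dD R_dB R_dd R_BM R_BA R_BD R_DM R_DA R_AM R_EM R_EA R_ED R_EB R_Ed R_LD R_LB R_Ld R_LM R_LA

lemmas lins = Dx_add Dx_scale Dx_minus Dx_diff Dx_zero Du_add Du_scale Du_minus Du_diff Du_zero
  uDx_add uDx_scale uDx_minus uDx_diff uDx_zero DuDx_add DuDx_scale DuDx_minus DuDx_diff DuDx_zero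
  Eo_add Eo_scale Eo_minus Eo_diff Eo_zero Lo_add Lo_scale Lo_minus Lo_diff Lo_zero
  Mo_add Mo_scale Mo_minus Mo_diff Mo_zero
lemmas goods = good_add good_scale good_minus good_diff good_zero good_Mo good_Dx good_Du good_uDx good_DuDx good_Eo good_Lo



theorem proposition4p1:
  fixes f :: "(real, 'n::{finite,linorder}) vec \<Rightarrow> (real, 'n) vec \<Rightarrow> 'n cl" and k :: nat
  assumes "CARD('n) \<ge> 3" and "k \<ge> 1"
    and "real CARD('n) + 2 * real k - 4 \<noteq> 0"
    and "smooth (\<lambda>p. f (fst p) (snd p))"
    and "\<forall>x. in_H k (f x)"
  shows "D2 k f = (\<lambda>x u.
            - R k (R k (Pp k f)) x u
            + (2 / (real CARD('n) + 2 * real k - 4)) *\<^sub>R Tstar k (R k (Pp k f)) x u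
            - (2 / (real CARD('n) + 2 * real k - 4)) *\<^sub>R T k (Q k (Pm k f)) x u
            - ((real CARD('n) + 2 * real k) / (real CARD('n) + 2 * real k - 4)) *\<^sub>R Q k (Q k (Pm k f)) x u)
       \<and> D2 k f = (\<lambda>x u.
            - R k (R k (Pp k f)) x u
            + (2 / (real CARD('n) + 2 * real k - 4)) *\<^sub>R R k (T k (Pm k f)) x u
            - (2 / (real CARD('n) + 2 * real k - 4)) *\<^sub>R Q k (Tstar k (Pp k f)) x u
            - ((real CARD('n) + 2 * real k) / (real CARD('n) + 2 * real k - 4)) *\<^sub>R Q k (Q k (Pm k f)) x u)"
proof -
  have g: "good f" using assms(4) unfolding good_def Gof_def .
  have E: "Eo f = (\<lambda>x u. real k *\<^sub>R f x u)"
    using Euler[OF g] assms(5) unfolding in_H_def by blast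
  have L: "Lo f = (\<lambda>x u. 0)"
    using Harm assms(5) unfolding in_H_def by blast
  have a: "real CARD('n) + 2 * real k - 2 \<noteq> 0" using assms(1) by simp
  have b: "real CARD('n) + 2 * real k - 4 \<noteq> 0" using assms(3) .
  define p where "p = 1 / (real CARD('n) + 2 * real k - 2)"
  define q where "q = 1 / (real CARD('n) + 2 * real k - 4)"
  have e1: "1 / (real CARD('n) + 2 * real k - 2) = p" by (simp add: p_def)
  have e2: "2 / (real CARD('n) + 2 * real k - 4) = 2 * q" by (simp add: q_def)
  have e3: "(real CARD('n) + 2 * real k) / (real CARD('n) + 2 * real k - 4) = (real CARD('n) + 2 * real k) * q" by (simp add: q_def)
  have e4: "4 / (real CARD('n) + 2 * real k - 2) = 4 * p" by (simp add: p_def)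
  have e5: "4 / ((real CARD('n) + 2 * real k - 2) * (real CARD('n) + 2 * real k - 4)) = 4 * p * q" by (simp add: p_def q_def)
  have hp: "complex_of_real p * (of_nat CARD('n) + 2 * of_nat k - 2) = 1"
  proof -
    have "p * (real CARD('n) + 2 * real k - 2) = 1" using a by (simp add: p_def)
    then have "complex_of_real (p * (real CARD('n) + 2 * real k - 2)) = 1" by simp
    then show ?thesis by simp
  qed
  have hq: "complex_of_real q * (of_nat CARD('n) + 2 * of_nat k - 4) = 1"
  proof -
    have "q * (real CARD('n) + 2 * real k - 4) = 1" using b by (simp add: q_def)
    then have "complex_of_real (q * (real CARD('n) + 2 * real k - 4)) = 1" by simp
    then show ?thesis by simp
  qed
  have c1: "D2 k f = (\<lambda>x u.
            - R k (R k (Pp k f)) x u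
            + (2 / (real CARD('n) + 2 * real k - 4)) *\<^sub>R Tstar k (R k (Pp k f)) x u
            - (2 / (real CARD('n) + 2 * real k - 4)) *\<^sub>R T k (Q k (Pm k f)) x u
            - ((real CARD('n) + 2 * real k) / (real CARD('n) + 2 * real k - 4)) *\<^sub>R Q k (Q k (Pm k f)) x u)"
    unfolding D2_alt[OF g] R_def T_def Tstar_def Q_def Pp_alt Pm_alt e1 e2 e3 e4 e5
    apply (simp only: rels E L lins goods g)
    apply (intro ext)
    apply (subst vec_eq_iff, intro allI)
    apply (simp only: vector_add_component vector_minus_component vector_uminus_component vector_scaleR_component zero_index scaleR_conv_of_real[where 'a=complex]
       of_real_mult of_real_add of_real_diff of_real_numeral of_real_of_nat_eq of_real_minus)
    using hp hq by algebra
  have c2: "D2 k f = (\<lambda>x u.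
            - R k (R k (Pp k f)) x u
            + (2 / (real CARD('n) + 2 * real k - 4)) *\<^sub>R R k (T k (Pm k f)) x u
            - (2 / (real CARD('n) + 2 * real k - 4)) *\<^sub>R Q k (Tstar k (Pp k f)) x u
            - ((real CARD('n) + 2 * real k) / (real CARD('n) + 2 * real k - 4)) *\<^sub>R Q k (Q k (Pm k f)) x u)"
    unfolding D2_alt[OF g] R_def T_def Tstar_def Q_def Pp_alt Pm_alt e1 e2 e3 e4 e5
    apply (simp only: rels E L lins goods g)
    apply (intro ext)
    apply (subst vec_eq_iff, intro allI)
    apply (simp only: vector_add_component vector_minus_component vector_uminus_component vector_scaleR_component zero_index scaleR_conv_of_real[where 'a=complex]
       of_real_mult of_real_add of_real_diff of_real_numeral of_real_of_nat_eq of_real_minus)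
    using hp hq by algebra
  show ?thesis using c1 c2 by blast
qed

end
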